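(* In the Nakagami model with parameters $L_c>0$, $L_s>0$, the distortion exponent achievable by the hybrid digital-analog scheme with $\eta^2=\rho^{r_h}$, $$\Delta_{hda}(L_s,L_c):=\sup_{r_h\in\mathbb R}\ \lim_{\rho\to\infty}-\frac{\log ED_{hda}(\rho^{r_h})}{\log\rho},$$ equals $$\Delta_{hda}(L_s,L_c)=\min\{1,L_s+L_c\}+\frac{\min\{1,L_c\}\,(L_s-1)^+}{L_s-1+\min\{1,L_c\}}.$$
   Context: Nakagami model: for SNR $\rho>0$, the channel gain is $H=\rho H_0$ and the side-information gain is $\Gamma=\rho\Gamma_0$, where $H_0,\Gamma_0$ are independent, $H_0$ is Gamma distributed with shape $L_c$ and scale $1/L_c$, and $\Gamma_0$ is Gamma distributed with shape $L_s$ and scale $1/L_s$ (Gamma$(L,\theta)$ density $\frac{1}{\theta^L\Gamma(L)}x^{L-1}e^{-x/\theta}$, $x\ge0$). $(x)^+=\max\{0,x\}$. HDA expected distortion: for a parameter $\eta^2>0$, define the outage set $\mathcal O_h=\{(h,\gamma): h(1+\gamma)\le \eta^2(1+h)\}$ and $$ED_{hda}(\eta^2)=\mathrm E\!\left[\frac{\mathbf 1\{(H,\Gamma)\notin\mathcal O_h\}}{1+\Gamma+\eta^2(1+H)}\right]+\mathrm E\!\left[\frac{\mathbf 1\{(H,\Gamma)\in\mathcal O_h\}}{1+\Gamma}\right].$$ *)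

theory Defs
  imports "HOL-Analysis.Analysis"
begin

definition gamma_density :: "real \<Rightarrow> real \<Rightarrow> real \<Rightarrow> real" where
  "gamma_density L \<theta> x =
     (if 0 \<le> x then x powr (L - 1) * exp (- x / \<theta>) / (\<theta> powr L * Gamma L) else 0)"

text \<open>Distortion realised by HDA for given realisations h (channel gain) and g (side information gain).\<close>
definition hda_loss :: "real \<Rightarrow> real \<Rightarrow> real \<Rightarrow> real" where
  "hda_loss \<eta>2 h g =
     (if h * (1 + g) \<le> \<eta>2 * (1 + h) then 1 / (1 + g)
      else 1 / (1 + g + \<eta>2 * (1 + h)))"

text \<open>Expected HDA distortion in the Nakagami model at SNR rho:
  H = rho H0, Gamma = rho Gamma0, H0 ~ Gamma(Lc, 1/Lc), Gamma0 ~ Gamma(Ls, 1/Ls) independent.\<close>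
definition ED_hda :: "real \<Rightarrow> real \<Rightarrow> real \<Rightarrow> real \<Rightarrow> real" where
  "ED_hda Lc Ls \<rho> \<eta>2 =
     integral\<^sup>L (lborel \<Otimes>\<^sub>M lborel)
       (\<lambda>(h0, g0). gamma_density Lc (1 / Lc) h0 * gamma_density Ls (1 / Ls) g0
                    * hda_loss \<eta>2 (\<rho> * h0) (\<rho> * g0))"

definition hda_exponent :: "real \<Rightarrow> real \<Rightarrow> real \<Rightarrow> real" where
  "hda_exponent Lc Ls r = Lim at_top (\<lambda>\<rho>. - ln (ED_hda Lc Ls \<rho> (\<rho> powr r)) / ln \<rho>)"

end

theory Submission
  imports Defs
begin



lemma gamma_int_aux:
  fixes L a :: real
  assumes L: "L > 0" and a: "a > -1"
  shows "integrable lborel (\<lambda>x. indicator {0..} x * x powr a * exp (-(L*x)))"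
proof -
  define g where "g = (\<lambda>t::real. indicator {0..} t * t powr a / exp t)"
  have gm[measurable]: "g \<in> borel_measurable lborel" unfolding g_def by measurable
  have "nn_integral lborel (\<lambda>t. ennreal (g t)) = ennreal (Gamma (a+1))"
    using Gamma_conv_nn_integral_real[of "a+1"] a unfolding g_def by simp
  hence gi: "integrable lborel g"
    by (intro integrableI_nn_integral_finite[OF gm]) (auto simp: g_def)
  hence "integrable lborel (\<lambda>x. g (0 + L * x))"
    using lborel_integrable_real_affine_iff[of L g 0] L by simp
  hence "integrable lborel (\<lambda>x. (1 / L powr a) * g (0 + L * x))" by simp
  moreover have "(\<lambda>x. (1 / L powr a) * g (0 + L * x)) = (\<lambda>x. indicator {0..} x * x powr a * exp (-(L*x)))"
  proof
    fix x :: real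
    show "(1 / L powr a) * g (0 + L * x) = indicator {0..} x * x powr a * exp (-(L*x))"
    proof (cases "x \<ge> 0")
      case True
      then show ?thesis using L by (simp add: g_def powr_mult exp_minus field_simps indicator_def)
    next
      case False
      then have "\<not> 0 \<le> L * x" using L by (simp add: mult_le_0_iff zero_le_mult_iff)
      then show ?thesis using False by (simp add: g_def indicator_def)
    qed
  qed
  ultimately show ?thesis by simp
qed



lemma prod_integrable:
  fixes F G :: "real \<Rightarrow> real"
  assumes F: "integrable lborel F" and G: "integrable lborel G"
  shows "integrable (lborel \<Otimes>\<^sub>M lborel) (\<lambda>(x,y). F x * G y)"
    and "integral\<^sup>L (lborel \<Otimes>\<^sub>M lborel) (\<lambda>(x,y). F x * G y) = integral\<^sup>L lborel F * integral\<^sup>L lborel G"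
proof -
  have [measurable]: "F \<in> borel_measurable lborel" "G \<in> borel_measurable lborel"
    using F G by auto
  show I: "integrable (lborel \<Otimes>\<^sub>M lborel) (\<lambda>(x,y). F x * G y)"
  proof (rule lborel_pair.Fubini_integrable)
    show "(\<lambda>(x,y). F x * G y) \<in> borel_measurable (lborel \<Otimes>\<^sub>M lborel)" by measurable
    have "(\<lambda>x. \<integral> y. norm (F x * G y) \<partial>lborel) = (\<lambda>x. norm (F x) * (\<integral> y. norm (G y) \<partial>lborel))"
      by (simp add: abs_mult)
    then show "integrable lborel (\<lambda>x. \<integral> y. norm (case (x, y) of (x, y) \<Rightarrow> F x * G y) \<partial>lborel)"
      using F by simp
    show "AE x in lborel. integrable lborel (\<lambda>y. case (x, y) of (x, y) \<Rightarrow> F x * G y)"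
      using G by simp
  qed
  have "integral\<^sup>L (lborel \<Otimes>\<^sub>M lborel) (\<lambda>(x,y). F x * G y) = (\<integral>x. (\<integral>y. F x * G y \<partial>lborel) \<partial>lborel)"
    using lborel_pair.integral_fst[of "\<lambda>x y. F x * G y"] I by simp
  also have "\<dots> = integral\<^sup>L lborel F * integral\<^sup>L lborel G"
    by (simp add: integral_mult_left_zero)
  finally show "integral\<^sup>L (lborel \<Otimes>\<^sub>M lborel) (\<lambda>(x,y). F x * G y) = integral\<^sup>L lborel F * integral\<^sup>L lborel G" .
qed



abbreviation gd :: "real \<Rightarrow> real \<Rightarrow> real" where "gd L x \<equiv> gamma_density L (1/L) x"

lemma gd_nonneg: assumes "L > 0" shows "gd L x \<ge> 0"
  using assms by (simp add: gamma_density_def Gamma_real_pos)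

lemma gd_measurable[measurable]: "gd L \<in> borel_measurable borel"
  unfolding gamma_density_def by measurable

lemma gd_moment_eq:
  assumes L: "L > 0"
  shows "gd L x * x powr (-s) = (1 / ((1/L) powr L * Gamma L)) * (indicator {0..} x * x powr (L - 1 - s) * exp (-(L*x)))"
proof (cases "x > 0")
  case True
  have "x powr (L - 1) * x powr (-s) = x powr (L - 1 - s)"
    using True by (simp add: powr_add[symmetric])
  then show ?thesis using True L
    by (simp add: gamma_density_def indicator_def field_simps)
next
  case False
  then show ?thesis by (cases "x = 0") (auto simp: gamma_density_def indicator_def)
qed



lemma gd_moment_int:
  assumes L: "L > 0" and s: "s < L"
  shows "integrable lborel (\<lambda>x. gd L x * x powr (-s))"
  unfolding gd_moment_eq[OF L]
  using gamma_int_aux[OF L, of "L - 1 - s"] s by simp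

lemma gd_int:
  assumes L: "L > 0"
  shows "integrable lborel (gd L)"
proof -
  have "(\<lambda>x. gd L x * x powr (-0)) = gd L"
  proof
    fix x show "gd L x * x powr (-0) = gd L x"
      by (cases "x = 0") (auto simp: gamma_density_def)
  qed
  then show ?thesis using gd_moment_int[OF L, of 0] L by simp
qed

definition kap :: "real \<Rightarrow> real" where
  "kap L = exp (-(\<bar>L - 1\<bar> * ln 2)) * exp (-L) / (2 * ((1/L) powr L * Gamma L))"

lemma kap_pos: "L > 0 \<Longrightarrow> kap L > 0"
  by (simp add: kap_def Gamma_real_pos)

lemma gd_lower_pt:
  assumes L: "L > 0" and a: "0 < a" "a \<le> 1" and x: "a/2 \<le> x" "x \<le> a"
  shows "gd L x \<ge> 2 * kap L * a powr (L - 1)"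
proof -
  have xp: "x > 0" using a x by auto
  have "\<bar>ln x - ln a\<bar> \<le> ln 2"
  proof -
    have "ln x \<le> ln a" using x xp by simp
    moreover have "ln (a/2) \<le> ln x" using x a by simp
    moreover have "ln (a/2) = ln a - ln 2" using a by (simp add: ln_div)
    ultimately show ?thesis by simp
  qed
  hence "\<bar>(L - 1) * (ln x - ln a)\<bar> \<le> \<bar>L - 1\<bar> * ln 2"
    by (simp add: abs_mult mult_left_mono)
  hence "(L - 1) * ln x \<ge> (L - 1) * ln a - \<bar>L - 1\<bar> * ln 2"
    by (simp add: algebra_simps abs_le_iff)
  hence "exp ((L - 1) * ln a - \<bar>L - 1\<bar> * ln 2) \<le> exp ((L - 1) * ln x)" by simp
  moreover have "exp ((L - 1) * ln a - \<bar>L - 1\<bar> * ln 2) = a powr (L - 1) * exp (-(\<bar>L - 1\<bar> * ln 2))"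
    using a by (simp add: powr_def exp_diff exp_minus exp_add field_simps)
  moreover have "exp ((L - 1) * ln x) = x powr (L - 1)" using xp by (simp add: powr_def)
  ultimately have e1: "x powr (L - 1) \<ge> a powr (L - 1) * exp (-(\<bar>L - 1\<bar> * ln 2))" by simp
  have e2: "exp (- x / (1/L)) \<ge> exp (-L)"
    using x a L by (simp add: mult_le_cancel_left1)
  have K: "(1/L) powr L * Gamma L > 0" using L by (simp add: Gamma_real_pos)
  have "gd L x = x powr (L - 1) * exp (- x / (1/L)) / ((1/L) powr L * Gamma L)"
    using xp by (simp add: gamma_density_def)
  also have "\<dots> \<ge> a powr (L - 1) * exp (-(\<bar>L - 1\<bar> * ln 2)) * exp (-L) / ((1/L) powr L * Gamma L)"
    using K e1 e2 by (intro divide_right_mono mult_mono) auto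
  finally show ?thesis unfolding kap_def using K by (simp add: field_simps)
qed

lemma gd_lower:
  assumes L: "L > 0" and a: "0 < a" "a \<le> 1"
  shows "integral\<^sup>L lborel (\<lambda>x. gd L x * indicator {a/2..a} x) \<ge> kap L * a powr L"
proof -
  let ?c = "2 * kap L * a powr (L - 1)"
  have "integral\<^sup>L lborel (\<lambda>x. ?c * indicator {a/2..a} x) = ?c * (a - a/2)"
    using a by simp
  also have "\<dots> = kap L * (a powr (L - 1) * a powr 1)"
    using a by (simp add: field_simps)
  also have "\<dots> = kap L * a powr L"
    by (simp only: powr_add[symmetric]) simp
  finally have eq: "integral\<^sup>L lborel (\<lambda>x. ?c * indicator {a/2..a} x) = kap L * a powr L" .
  have "integral\<^sup>L lborel (\<lambda>x. ?c * indicator {a/2..a} x) \<le> integral\<^sup>L lborel (\<lambda>x. gd L x * indicator {a/2..a} x)"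
  proof (rule integral_mono)
    show "integrable lborel (\<lambda>x. ?c * indicator {a/2..a} x)"
      using a by (simp add: integrable_real_indicator)
    show "integrable lborel (\<lambda>x. gd L x * indicator {a/2..a} x)"
      using gd_int[OF L] by (intro integrable_real_mult_indicator) auto
    fix x show "?c * indicator {a/2..a} x \<le> gd L x * indicator {a/2..a} x"
      using gd_lower_pt[OF L a, of x] by (auto simp: indicator_def)
  qed
  with eq show ?thesis by linarith
qed


lemma loss_le: assumes "e > 0" "h \<ge> 0" "g \<ge> 0" shows "hda_loss e h g \<le> 1/(1+g)"
proof -
  have "0 < 1 + g" "1 + g \<le> 1 + g + e * (1 + h)" using assms by auto
  then show ?thesis by (auto simp: hda_loss_def intro!: frac_le)
qed

lemma loss_ge: assumes "e > 0" "h \<ge> 0" "g \<ge> 0" shows "hda_loss e h g \<ge> 1/(1+g+e*(1+h))"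
proof -
  have "0 < 1 + g" "1 + g \<le> 1 + g + e * (1 + h)" using assms by auto
  then show ?thesis by (auto simp: hda_loss_def intro!: frac_le)
qed

lemma loss_nonneg: assumes "e > 0" "h \<ge> 0" "g \<ge> 0" shows "hda_loss e h g \<ge> 0"
  using assms by (auto simp: hda_loss_def)

lemma loss_le1: assumes "e > 0" "h \<ge> 0" "g \<ge> 0" shows "hda_loss e h g \<le> 1"
proof -
  have "1/(1+g) \<le> 1" using assms by simp
  then show ?thesis using loss_le[OF assms] by linarith
qed

lemma loss_mono:
  assumes e: "e > 0" and h: "0 \<le> h" "h \<le> h'" and g: "0 \<le> g" "g \<le> g'"
  shows "hda_loss e h' g' \<le> hda_loss e h g"
proof -
  have p: "0 < 1 + g" "0 < 1+g+e*(1+h)" using e h g by (auto intro: add_pos_nonneg)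
  consider "h' * (1 + g') \<le> e * (1 + h')" "h * (1 + g) \<le> e * (1 + h)"
    | "\<not> h' * (1 + g') \<le> e * (1 + h')" "h * (1 + g) \<le> e * (1 + h)"
    | "\<not> h' * (1 + g') \<le> e * (1 + h')" "\<not> h * (1 + g) \<le> e * (1 + h)"
    | "h' * (1 + g') \<le> e * (1 + h')" "\<not> h * (1 + g) \<le> e * (1 + h)" by blast
  then show ?thesis
  proof cases
    case 1 then show ?thesis using p g by (simp add: hda_loss_def frac_le)
  next
    case 2
    have "1 + g \<le> 1 + g' + e * (1 + h')" using g h e by (simp add: add_increasing2)
    then show ?thesis using 2 p by (simp add: hda_loss_def frac_le)
  next
    case 3
    have "1 + g + e * (1 + h) \<le> 1 + g' + e * (1 + h')" using g h e by (intro add_mono mult_left_mono) auto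
    then show ?thesis using 3 p by (simp add: hda_loss_def frac_le)
  next
    case 4
    have a: "h * (1 + g - e) > e" using 4 by (simp add: algebra_simps)
    hence "1 + g - e > 0" using h e by (smt (verit) mult_nonpos_nonneg mult_nonneg_nonpos)
    hence "h' * (1 + g' - e) \<ge> h * (1 + g - e)" using h g by (intro mult_mono) auto
    with a have "h' * (1 + g' - e) > e" by simp
    with 4 show ?thesis by (simp add: algebra_simps)
  qed
qed

lemma gd_zero: "x \<le> 0 \<Longrightarrow> gd L x = 0"
  by (cases "x = 0") (auto simp: gamma_density_def)

lemma loss_measurable[measurable]: "(\<lambda>(x,y). hda_loss e (r*x) (r*y)) \<in> borel_measurable (lborel \<Otimes>\<^sub>M lborel)"
  unfolding hda_loss_def by measurable

lemma ED_integrable: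
  assumes Lc: "Lc > 0" and Ls: "Ls > 0" and r: "\<rho> > 0" and e: "e > 0"
  shows "integrable (lborel \<Otimes>\<^sub>M lborel) (\<lambda>(h0, g0). gd Lc h0 * gd Ls g0 * hda_loss e (\<rho> * h0) (\<rho> * g0))"
proof (rule Bochner_Integration.integrable_bound[where f="\<lambda>(x,y). gd Lc x * gd Ls y"])
  show "integrable (lborel \<Otimes>\<^sub>M lborel) (\<lambda>(x,y). gd Lc x * gd Ls y)"
    by (rule prod_integrable(1)[OF gd_int[OF Lc] gd_int[OF Ls]])
  show "(\<lambda>(h0, g0). gd Lc h0 * gd Ls g0 * hda_loss e (\<rho> * h0) (\<rho> * g0)) \<in> borel_measurable (lborel \<Otimes>\<^sub>M lborel)"
    by measurable
  show "AE x in lborel \<Otimes>\<^sub>M lborel. norm ((\<lambda>(h0, g0). gd Lc h0 * gd Ls g0 * hda_loss e (\<rho> * h0) (\<rho> * g0)) x)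
         \<le> norm ((\<lambda>(x,y). gd Lc x * gd Ls y) x)"
  proof (rule AE_I2, clarify)
    fix x y :: real
    show "norm (gd Lc x * gd Ls y * hda_loss e (\<rho> * x) (\<rho> * y)) \<le> norm (gd Lc x * gd Ls y)"
    proof (cases "x \<le> 0 \<or> y \<le> 0")
      case True then show ?thesis by (auto simp: gd_zero)
    next
      case False
      then have "0 \<le> hda_loss e (\<rho> * x) (\<rho> * y)" "hda_loss e (\<rho> * x) (\<rho> * y) \<le> 1"
        using loss_nonneg[OF e] loss_le1[OF e] r by auto
      moreover have "0 \<le> gd Lc x * gd Ls y" using gd_nonneg Lc Ls by simp
      ultimately show ?thesis by (simp add: abs_mult mult_left_le)
    qed
  qed
qed

lemma ED_eq: "ED_hda Lc Ls \<rho> e = integral\<^sup>L (lborel \<Otimes>\<^sub>M lborel) (\<lambda>(h0, g0). gd Lc h0 * gd Ls g0 * hda_loss e (\<rho> * h0) (\<rho> * g0))"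
  by (simp add: ED_hda_def)


definition Mom :: "real \<Rightarrow> real \<Rightarrow> real" where
  "Mom L s = integral\<^sup>L lborel (\<lambda>x. gd L x * x powr (-s))"

lemma ED_upper:
  assumes Lc: "Lc > 0" and Ls: "Ls > 0" and r: "\<rho> > 0" and e: "e > 0"
    and s: "s1 < Lc" "s2 < Lc" "s3 < Lc" and t: "t1 < Ls" "t2 < Ls" "t3 < Ls"
    and pt: "\<And>x y. x > 0 \<Longrightarrow> y > 0 \<Longrightarrow> hda_loss e (\<rho>*x) (\<rho>*y) \<le>
        K1 * x powr (-s1) * y powr (-t1) + K2 * x powr (-s2) * y powr (-t2) + K3 * x powr (-s3) * y powr (-t3)"
  shows "ED_hda Lc Ls \<rho> e \<le> K1 * Mom Lc s1 * Mom Ls t1 + K2 * Mom Lc s2 * Mom Ls t2 + K3 * Mom Lc s3 * Mom Ls t3"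
proof -
  define P where "P = (\<lambda>s t (x::real,y::real). (gd Lc x * x powr (-s)) * (gd Ls y * y powr (-t)))"
  have Pint: "integrable (lborel \<Otimes>\<^sub>M lborel) (P s t)" "integral\<^sup>L (lborel \<Otimes>\<^sub>M lborel) (P s t) = Mom Lc s * Mom Ls t"
    if "s < Lc" "t < Ls" for s t
    unfolding P_def Mom_def
    using prod_integrable[OF gd_moment_int[OF Lc that(1)] gd_moment_int[OF Ls that(2)]] by auto
  define G where "G = (\<lambda>z. K1 * P s1 t1 z + K2 * P s2 t2 z + K3 * P s3 t3 z)"
  note i1 = Pint[OF s(1) t(1)] and i2 = Pint[OF s(2) t(2)] and i3 = Pint[OF s(3) t(3)]
  have Gi: "integrable (lborel \<Otimes>\<^sub>M lborel) G"
    unfolding G_def using i1 i2 i3 by auto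
  have "integral\<^sup>L (lborel \<Otimes>\<^sub>M lborel) G = K1 * Mom Lc s1 * Mom Ls t1 + K2 * Mom Lc s2 * Mom Ls t2 + K3 * Mom Lc s3 * Mom Ls t3"
    unfolding G_def using i1 i2 i3 by simp
  moreover have "ED_hda Lc Ls \<rho> e \<le> integral\<^sup>L (lborel \<Otimes>\<^sub>M lborel) G"
    unfolding ED_eq
  proof (rule integral_mono[OF ED_integrable[OF Lc Ls r e] Gi])
    fix z :: "real \<times> real"
    obtain x y where z: "z = (x,y)" by (cases z)
    show "(\<lambda>(h0, g0). gd Lc h0 * gd Ls g0 * hda_loss e (\<rho> * h0) (\<rho> * g0)) z \<le> G z"
    proof (cases "x > 0 \<and> y > 0")
      case True
      have "gd Lc x * gd Ls y * hda_loss e (\<rho> * x) (\<rho> * y) \<le> gd Lc x * gd Ls y *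
         (K1 * x powr (-s1) * y powr (-t1) + K2 * x powr (-s2) * y powr (-t2) + K3 * x powr (-s3) * y powr (-t3))"
        using True pt[of x y] gd_nonneg[OF Lc, of x] gd_nonneg[OF Ls, of y] by (intro mult_left_mono) auto
      also have "\<dots> = G z" unfolding G_def P_def z by (simp add: algebra_simps)
      finally show ?thesis using z by simp
    next
      case False
      then have "x \<le> 0 \<or> y \<le> 0" by auto
      then show ?thesis unfolding G_def P_def z by (auto simp: gd_zero)
    qed
  qed
  ultimately show ?thesis by simp
qed

lemma ED_lower:
  assumes Lc: "Lc > 0" and Ls: "Ls > 0" and r: "\<rho> > 0" and e: "e > 0"
    and a: "0 < a" "a \<le> 1" and b: "0 < b" "b \<le> 1"
  shows "ED_hda Lc Ls \<rho> e \<ge> kap Lc * a powr Lc * (kap Ls * b powr Ls) * hda_loss e (\<rho>*a) (\<rho>*b)"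
proof -
  define F where "F = (\<lambda>x. gd Lc x * indicator {a/2..a} x)"
  define H where "H = (\<lambda>y. gd Ls y * indicator {b/2..b} y)"
  have Fi: "integrable lborel F" unfolding F_def using gd_int[OF Lc] by (intro integrable_real_mult_indicator) auto
  have Hi: "integrable lborel H" unfolding H_def using gd_int[OF Ls] by (intro integrable_real_mult_indicator) auto
  let ?l = "hda_loss e (\<rho>*a) (\<rho>*b)"
  have l0: "?l \<ge> 0" using loss_nonneg[OF e] r a b by simp
  have G: "integrable (lborel \<Otimes>\<^sub>M lborel) (\<lambda>z. ?l * (\<lambda>(x,y). F x * H y) z)"
    using prod_integrable(1)[OF Fi Hi] by simp
  have "integral\<^sup>L (lborel \<Otimes>\<^sub>M lborel) (\<lambda>z. ?l * (\<lambda>(x,y). F x * H y) z) = ?l * (integral\<^sup>L lborel F * integral\<^sup>L lborel H)"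
    using prod_integrable(2)[OF Fi Hi] by simp
  also have "\<dots> \<ge> ?l * (kap Lc * a powr Lc * (kap Ls * b powr Ls))"
  proof -
    have "0 \<le> integral\<^sup>L lborel F" unfolding F_def using gd_nonneg[OF Lc] by (intro Bochner_Integration.integral_nonneg) (simp add: indicator_def)
    moreover have "0 \<le> kap Ls * b powr Ls" using kap_pos[OF Ls] by simp
    ultimately show ?thesis
      using gd_lower[OF Lc a] gd_lower[OF Ls b] l0 unfolding F_def H_def
      by (intro mult_left_mono mult_mono) auto
  qed
  finally have 1: "integral\<^sup>L (lborel \<Otimes>\<^sub>M lborel) (\<lambda>z. ?l * (\<lambda>(x,y). F x * H y) z) \<ge> ?l * (kap Lc * a powr Lc * (kap Ls * b powr Ls))" .
  have "integral\<^sup>L (lborel \<Otimes>\<^sub>M lborel) (\<lambda>z. ?l * (\<lambda>(x,y). F x * H y) z) \<le> ED_hda Lc Ls \<rho> e"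
    unfolding ED_eq
  proof (rule integral_mono[OF G ED_integrable[OF Lc Ls r e]])
    fix z :: "real \<times> real"
    obtain x y where z: "z = (x,y)" by (cases z)
    show "?l * (\<lambda>(x,y). F x * H y) z \<le> (\<lambda>(h0, g0). gd Lc h0 * gd Ls g0 * hda_loss e (\<rho> * h0) (\<rho> * g0)) z"
    proof (cases "x \<in> {a/2..a} \<and> y \<in> {b/2..b}")
      case True
      have "?l \<le> hda_loss e (\<rho> * x) (\<rho> * y)"
        using True a b r by (intro loss_mono[OF e]) auto
      then show ?thesis unfolding z F_def H_def using True gd_nonneg[OF Lc, of x] gd_nonneg[OF Ls, of y]
        by (simp add: mult_left_mono mult.commute mult.left_commute)
    next
      case False
      have "0 \<le> gd Lc x * gd Ls y * hda_loss e (\<rho> * x) (\<rho> * y)"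
      proof (cases "x \<le> 0 \<or> y \<le> 0")
        case True then show ?thesis by (auto simp: gd_zero)
      next
        case False then show ?thesis
          using gd_nonneg[OF Lc, of x] gd_nonneg[OF Ls, of y] loss_nonneg[OF e, of "\<rho>*x" "\<rho>*y"] r by simp
      qed
      moreover have "F x * H y = 0" using False unfolding F_def H_def by (auto simp: indicator_def)
      ultimately show ?thesis unfolding z case_prod_conv by (metis mult_zero_right)
    qed
  qed
  with 1 show ?thesis by (simp add: mult_ac)
qed


lemma Mom_nonneg: "L > 0 \<Longrightarrow> Mom L s \<ge> 0"
  unfolding Mom_def using gd_nonneg
  by (intro Bochner_Integration.integral_nonneg) (auto intro!: mult_nonneg_nonneg)

definition mono3 :: "real \<Rightarrow> real \<Rightarrow> real \<Rightarrow> real \<Rightarrow> real \<Rightarrow> real \<Rightarrow> real \<Rightarrow> real" where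
  "mono3 K c s t \<rho> x y = exp K * \<rho> powr (-c) * x powr (-s) * y powr (-t)"

lemma mono3_exp: "\<rho> > 0 \<Longrightarrow> x > 0 \<Longrightarrow> y > 0 \<Longrightarrow>
   mono3 K c s t \<rho> x y = exp (K - c * ln \<rho> - s * ln x - t * ln y)"
  by (simp add: mono3_def powr_def exp_diff exp_minus exp_add field_simps)

lemma mono3_pos: "mono3 K c s t \<rho> x y \<ge> 0"
  by (simp add: mono3_def)

lemma le_mono3:
  assumes "\<rho> > 0" "x > 0" "y > 0" "u > 0" "ln u \<le> K - c * ln \<rho> - s * ln x - t * ln y"
  shows "u \<le> mono3 K c s t \<rho> x y"
proof -
  have "u = exp (ln u)" using assms by simp
  also have "\<dots> \<le> exp (K - c * ln \<rho> - s * ln x - t * ln y)" using assms(5) by (simp del: exp_ln)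
  finally show ?thesis using mono3_exp assms by simp
qed

lemma upper_from_pointwise:
  assumes Lc: "Lc > 0" and Ls: "Ls > 0"
    and s: "s1 < Lc" "s2 < Lc" "s3 < Lc" and t: "t1 < Ls" "t2 < Ls" "t3 < Ls"
    and c: "c1 \<ge> d" "c2 \<ge> d" "c3 \<ge> d"
    and ev: "eventually (\<lambda>\<rho>. \<forall>x y. x > 0 \<longrightarrow> y > 0 \<longrightarrow> hda_loss (\<rho> powr r) (\<rho>*x) (\<rho>*y) \<le>
        mono3 K1 c1 s1 t1 \<rho> x y + mono3 K2 c2 s2 t2 \<rho> x y + mono3 K3 c3 s3 t3 \<rho> x y) at_top"
  shows "\<exists>C. eventually (\<lambda>\<rho>. ED_hda Lc Ls \<rho> (\<rho> powr r) \<le> C * \<rho> powr (-d)) at_top"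
proof -
  define C where "C = exp K1 * Mom Lc s1 * Mom Ls t1 + exp K2 * Mom Lc s2 * Mom Ls t2 + exp K3 * Mom Lc s3 * Mom Ls t3"
  have "eventually (\<lambda>\<rho>. ED_hda Lc Ls \<rho> (\<rho> powr r) \<le> C * \<rho> powr (-d)) at_top"
    using ev eventually_ge_at_top[of 1]
  proof eventually_elim
    case (elim \<rho>)
    have r0: "\<rho> > 0" using elim by simp
    have "ED_hda Lc Ls \<rho> (\<rho> powr r) \<le> (exp K1 * \<rho> powr (-c1)) * Mom Lc s1 * Mom Ls t1
        + (exp K2 * \<rho> powr (-c2)) * Mom Lc s2 * Mom Ls t2 + (exp K3 * \<rho> powr (-c3)) * Mom Lc s3 * Mom Ls t3"
      by (rule ED_upper[OF Lc Ls r0 _ s t]) (use elim r0 in \<open>auto simp: mono3_def\<close>)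
    also have "\<dots> \<le> (exp K1 * \<rho> powr (-d)) * Mom Lc s1 * Mom Ls t1
        + (exp K2 * \<rho> powr (-d)) * Mom Lc s2 * Mom Ls t2 + (exp K3 * \<rho> powr (-d)) * Mom Lc s3 * Mom Ls t3"
      using elim c Mom_nonneg[OF Lc] Mom_nonneg[OF Ls]
      by (intro add_mono mult_right_mono mult_left_mono powr_mono) auto
    also have "\<dots> = C * \<rho> powr (-d)" unfolding C_def by (simp add: algebra_simps)
    finally show ?case .
  qed
  then show ?thesis by blast
qed

lemma comb2:
  fixes L a b p q :: real
  assumes "0 \<le> L" "a \<le> L" "b \<le> L" "0 \<le> p" "0 \<le> q" "p + q \<le> 1"
  shows "p * a + q * b \<le> L"
proof -
  have "p * a \<le> p * L" "q * b \<le> q * L" using assms by (auto intro: mult_left_mono)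
  moreover have "0 \<le> (1 - p - q) * L" using assms by simp
  ultimately show ?thesis by (simp add: algebra_simps)
qed

lemma lower_min:
  assumes "\<exists>c>0. eventually (\<lambda>\<rho>. f \<rho> \<ge> c * \<rho> powr (-T1)) at_top"
    and "\<exists>c>0. eventually (\<lambda>\<rho>. f \<rho> \<ge> c * \<rho> powr (-T2)) at_top"
  shows "\<exists>c>0. eventually (\<lambda>\<rho>. f \<rho> \<ge> c * \<rho> powr (-(min T1 T2))) at_top"
  using assms by (cases "T1 \<le> T2") (auto simp: min_def)

lemma ln_over_ln:
  "((\<lambda>\<rho>. K / ln \<rho>) \<longlongrightarrow> (0::real)) at_top"
  by (rule tendsto_divide_0[OF tendsto_const filterlim_at_top_imp_at_infinity[OF ln_at_top]])

lemma exponent_limit: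
  fixes f :: "real \<Rightarrow> real"
  assumes low: "\<exists>c>0. eventually (\<lambda>\<rho>. f \<rho> \<ge> c * \<rho> powr (-D)) at_top"
    and up: "\<And>\<delta>. \<delta> > 0 \<Longrightarrow> \<exists>C. eventually (\<lambda>\<rho>. f \<rho> \<le> C * \<rho> powr (-(D - \<delta>))) at_top"
  shows "((\<lambda>\<rho>. - ln (f \<rho>) / ln \<rho>) \<longlongrightarrow> D) at_top"
proof (rule order_tendstoI)
  obtain c where c: "c > 0" "eventually (\<lambda>\<rho>. f \<rho> \<ge> c * \<rho> powr (-D)) at_top" using low by blast
  fix y assume y: "y > D"
  have "eventually (\<lambda>\<rho>. - ln c / ln \<rho> < y - D) at_top"
    using ln_over_ln[of "- ln c"] y by (intro order_tendstoD) auto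
  then show "eventually (\<lambda>\<rho>. - ln (f \<rho>) / ln \<rho> < y) at_top"
    using c(2) eventually_gt_at_top[of 1]
  proof eventually_elim
    case (elim \<rho>)
    have lp: "ln \<rho> > 0" using elim by simp
    have "c * \<rho> powr (-D) > 0" using c elim by simp
    hence "ln (c * \<rho> powr (-D)) \<le> ln (f \<rho>)" using elim by (subst ln_le_cancel_iff) auto
    hence "ln c - D * ln \<rho> \<le> ln (f \<rho>)" using c elim by (simp add: ln_mult ln_powr)
    hence "- ln (f \<rho>) \<le> D * ln \<rho> - ln c" by simp
    hence "- ln (f \<rho>) / ln \<rho> \<le> (D * ln \<rho> - ln c) / ln \<rho>" using lp by (intro divide_right_mono) auto
    also have "\<dots> = D + (- ln c / ln \<rho>)" using lp by (simp add: field_simps)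
    finally show ?case using elim by simp
  qed
next
  obtain c where c: "c > 0" "eventually (\<lambda>\<rho>. f \<rho> \<ge> c * \<rho> powr (-D)) at_top" using low by blast
  fix y assume y: "y < D"
  define \<delta> where "\<delta> = (D - y) / 2"
  have d: "\<delta> > 0" using y by (simp add: \<delta>_def)
  obtain C where C: "eventually (\<lambda>\<rho>. f \<rho> \<le> C * \<rho> powr (-(D - \<delta>))) at_top" using up[OF d] by blast
  have "eventually (\<lambda>\<rho>. ln (max C 1) / ln \<rho> < \<delta>) at_top"
    using ln_over_ln[of "ln (max C 1)"] d by (intro order_tendstoD) auto
  then show "eventually (\<lambda>\<rho>. - ln (f \<rho>) / ln \<rho> > y) at_top"
    using c(2) C eventually_gt_at_top[of 1]
  proof eventually_elim
    case (elim \<rho>)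
    have lp: "ln \<rho> > 0" using elim by simp
    have fp: "f \<rho> > 0" using c elim by (smt (verit) powr_gt_zero mult_pos_pos)
    have "f \<rho> \<le> max C 1 * \<rho> powr (-(D - \<delta>))"
      using elim by (smt (verit) mult_right_mono powr_ge_zero)
    hence "ln (f \<rho>) \<le> ln (max C 1 * \<rho> powr (-(D - \<delta>)))" using fp by (subst ln_le_cancel_iff) auto
    moreover have "ln (max C 1 * \<rho> powr (-(D - \<delta>))) = ln (max C 1) - (D - \<delta>) * ln \<rho>"
      using elim by (subst ln_mult) (auto simp: ln_powr algebra_simps)
    ultimately have "ln (f \<rho>) \<le> ln (max C 1) - (D - \<delta>) * ln \<rho>" by simp
    hence "(ln (max C 1) - (D - \<delta>) * ln \<rho>) / ln \<rho> \<ge> ln (f \<rho>) / ln \<rho>" using lp by (simp add: divide_right_mono)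
    moreover have "(ln (max C 1) - (D - \<delta>) * ln \<rho>) / ln \<rho> = ln (max C 1) / ln \<rho> - (D - \<delta>)"
      using lp by (simp add: field_simps)
    ultimately have "- ln (f \<rho>) / ln \<rho> \<ge> (D - \<delta>) - ln (max C 1) / ln \<rho>" by simp
    moreover have "(D - \<delta>) - ln (max C 1) / ln \<rho> > D - 2 * \<delta>" using elim by simp
    moreover have "D - 2 * \<delta> = y" by (simp add: \<delta>_def field_simps)
    ultimately show ?case by simp
  qed
qed


lemma powr_neg_le1: "1 \<le> (x::real) \<Longrightarrow> 0 \<le> a \<Longrightarrow> x powr (-a) \<le> 1"
  using powr_mono[of "-a" 0 x] by simp

lemma lower_gen:
  assumes Lc: "Lc > 0" and Ls: "Ls > 0" and al: "\<alpha> \<ge> 0" and be: "\<beta> \<ge> 0"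
    and A: "0 < A" "A \<le> 1" and B: "0 < B" "B \<le> 1" and c0: "c0 > 0"
    and ev: "eventually (\<lambda>\<rho>. hda_loss (\<rho> powr r) (A * \<rho> powr (1 - \<alpha>)) (B * \<rho> powr (1 - \<beta>)) \<ge> c0 / \<rho> powr d) at_top"
  shows "\<exists>c>0. eventually (\<lambda>\<rho>. ED_hda Lc Ls \<rho> (\<rho> powr r) \<ge> c * \<rho> powr (-(Lc*\<alpha> + Ls*\<beta> + d))) at_top"
proof -
  define c where "c = kap Lc * A powr Lc * (kap Ls * B powr Ls) * c0"
  have cp: "c > 0" unfolding c_def using kap_pos[OF Lc] kap_pos[OF Ls] A B c0 by simp
  have "eventually (\<lambda>\<rho>. ED_hda Lc Ls \<rho> (\<rho> powr r) \<ge> c * \<rho> powr (-(Lc*\<alpha> + Ls*\<beta> + d))) at_top"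
    using ev eventually_ge_at_top[of 1]
  proof eventually_elim
    case (elim \<rho>)
    have r0: "\<rho> > 0" using elim by simp
    have cv: "c0 / \<rho> powr d = c0 * \<rho> powr (-d)" using r0 by (simp add: powr_minus divide_inverse)
    have a1: "A * \<rho> powr (-\<alpha>) \<le> 1"
      using A elim al by (intro mult_le_one) (auto simp: powr_neg_le1)
    have b1: "B * \<rho> powr (-\<beta>) \<le> 1"
      using B elim be by (intro mult_le_one) (auto simp: powr_neg_le1)
    have "ED_hda Lc Ls \<rho> (\<rho> powr r) \<ge> kap Lc * (A * \<rho> powr (-\<alpha>)) powr Lc * (kap Ls * (B * \<rho> powr (-\<beta>)) powr Ls)
          * hda_loss (\<rho> powr r) (\<rho>*(A * \<rho> powr (-\<alpha>))) (\<rho>*(B * \<rho> powr (-\<beta>)))"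
      by (rule ED_lower[OF Lc Ls r0]) (use A B a1 b1 r0 in auto)
    moreover have "\<rho>*(A * \<rho> powr (-\<alpha>)) = A * \<rho> powr (1 - \<alpha>)" "\<rho>*(B * \<rho> powr (-\<beta>)) = B * \<rho> powr (1 - \<beta>)"
      using r0 by (simp_all add: powr_diff powr_minus field_simps)
    moreover have "(A * \<rho> powr (-\<alpha>)) powr Lc = A powr Lc * \<rho> powr (-(Lc*\<alpha>))"
      "(B * \<rho> powr (-\<beta>)) powr Ls = B powr Ls * \<rho> powr (-(Ls*\<beta>))"
      using A B r0 by (simp_all add: powr_mult powr_powr mult.commute)
    ultimately have "ED_hda Lc Ls \<rho> (\<rho> powr r) \<ge> kap Lc * (A powr Lc * \<rho> powr (-(Lc*\<alpha>))) * (kap Ls * (B powr Ls * \<rho> powr (-(Ls*\<beta>))))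
          * (c0 * \<rho> powr (-d))"
      using elim kap_pos[OF Lc] kap_pos[OF Ls] A B unfolding cv
      by (smt (verit, ccfv_SIG) mult_left_mono mult_nonneg_nonneg powr_ge_zero)
    also have "kap Lc * (A powr Lc * \<rho> powr (-(Lc*\<alpha>))) * (kap Ls * (B powr Ls * \<rho> powr (-(Ls*\<beta>)))) * (c0 * \<rho> powr (-d))
       = c * (\<rho> powr (-(Lc*\<alpha>)) * \<rho> powr (-(Ls*\<beta>)) * \<rho> powr (-d))"
      unfolding c_def by (simp add: algebra_simps)
    also have "\<rho> powr (-(Lc*\<alpha>)) * \<rho> powr (-(Ls*\<beta>)) * \<rho> powr (-d) = \<rho> powr (-(Lc*\<alpha> + Ls*\<beta> + d))"
      by (simp add: powr_add[symmetric])
    finally show ?case .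
  qed
  with cp show ?thesis by blast
qed


lemma wit_ng:
  assumes "e > 0" "h \<ge> 0" "g \<ge> 0" "1 + g + e * (1 + h) \<le> K"
  shows "hda_loss e h g \<ge> 1 / K"
proof -
  have "0 < 1 + g + e * (1 + h)" using assms by (auto intro: add_pos_nonneg)
  hence "1 / K \<le> 1 / (1 + g + e * (1 + h))" using assms by (intro divide_left_mono) auto
  with loss_ge[OF assms(1-3)] show ?thesis by simp
qed

lemma wit_out:
  assumes "e > 0" "h \<ge> 0" "g \<ge> 0" "h * (1 + g) \<le> e * (1 + h)" "1 + g \<le> K"
  shows "hda_loss e h g \<ge> 1 / K"
proof -
  have "0 < 1 + g" using assms by auto
  hence "1 / K \<le> 1 / (1 + g)" using assms by (intro divide_left_mono) auto
  with assms show ?thesis by (simp add: hda_loss_def)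
qed

lemma powr_le1_of_nonpos: "1 \<le> (x::real) \<Longrightarrow> a \<le> 0 \<Longrightarrow> x powr a \<le> 1"
  using powr_mono[of a 0 x] by simp

lemma W1:
  assumes "r \<le> 0"
  shows "eventually (\<lambda>\<rho>. hda_loss (\<rho> powr r) (1 * \<rho> powr (1 - 0)) (1 * \<rho> powr (1 - 0)) \<ge> (1/4) / \<rho> powr 1) at_top"
  using eventually_ge_at_top[of 1]
proof eventually_elim
  case (elim \<rho>)
  have e: "\<rho> powr r \<le> 1" using elim assms by (rule powr_le1_of_nonpos)
  have "\<rho> powr r * (1 + \<rho>) \<le> 1 * (1 + \<rho>)" using e elim by (intro mult_right_mono) auto
  hence "1 + \<rho> + \<rho> powr r * (1 + \<rho>) \<le> 4 * \<rho>" using elim by (smt (verit))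
  hence "hda_loss (\<rho> powr r) \<rho> \<rho> \<ge> 1 / (4 * \<rho>)" using elim by (intro wit_ng) auto
  then show ?case using elim by simp
qed


lemma ev_powr_ge:
  fixes r K :: real
  assumes r: "r > 0" and K: "K > 0"
  shows "eventually (\<lambda>\<rho>. \<rho> powr r \<ge> K) at_top"
  using eventually_ge_at_top[of "K powr (1/r)"]
proof eventually_elim
  case (elim \<rho>)
  have "(K powr (1/r)) powr r \<le> \<rho> powr r" using elim r K by (intro powr_mono2) auto
  moreover have "(K powr (1/r)) powr r = K" using r K by (simp add: powr_powr)
  ultimately show ?case by simp
qed

lemma W2:
  assumes "r \<le> -1"
  shows "eventually (\<lambda>\<rho>. hda_loss (\<rho> powr r) (1 * \<rho> powr (1 - 0)) (1 * \<rho> powr (1 - 1)) \<ge> (1/4) / \<rho> powr 0) at_top"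
  using eventually_ge_at_top[of 1]
proof eventually_elim
  case (elim \<rho>)
  have "\<rho> powr r * \<rho> = \<rho> powr (r + 1)" using elim by (simp add: powr_add)
  also have "\<dots> \<le> 1" using elim assms by (intro powr_le1_of_nonpos) auto
  finally have a: "\<rho> powr r * \<rho> \<le> 1" .
  have b: "\<rho> powr r \<le> 1" using elim assms by (intro powr_le1_of_nonpos) auto
  have "1 + 1 + \<rho> powr r * (1 + \<rho>) \<le> 4" using a b by (simp add: algebra_simps)
  hence "hda_loss (\<rho> powr r) \<rho> 1 \<ge> 1 / 4" using elim by (intro wit_ng) auto
  then show ?case using elim by simp
qed

lemma W3:
  assumes "-1 < r" "r < 0"
  shows "eventually (\<lambda>\<rho>. hda_loss (\<rho> powr r) (1 * \<rho> powr (1 - 0)) (1 * \<rho> powr (1 - (-r))) \<ge> (1/4) / \<rho> powr (1 + r)) at_top"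
  using eventually_ge_at_top[of 1]
proof eventually_elim
  case (elim \<rho>)
  have a: "\<rho> powr r * \<rho> = \<rho> powr (1 + r)" using elim by (simp add: powr_add)
  have b: "\<rho> powr r \<le> 1" using elim assms by (intro powr_le1_of_nonpos) auto
  have c: "1 \<le> \<rho> powr (1 + r)" using elim assms by (intro ge_one_powr_ge_zero) auto
  have "1 + \<rho> powr (1 + r) + \<rho> powr r * (1 + \<rho>) \<le> 4 * \<rho> powr (1 + r)" using a b c by (simp add: algebra_simps)
  hence "hda_loss (\<rho> powr r) \<rho> (\<rho> powr (1 + r)) \<ge> 1 / (4 * \<rho> powr (1 + r))" using elim by (intro wit_ng) auto
  then show ?case using elim by simp
qed

lemma W4:
  assumes "-1 < r" "r < 0"
  shows "eventually (\<lambda>\<rho>. hda_loss (\<rho> powr r) (1 * \<rho> powr (1 - 0)) (1 * \<rho> powr (1 - 1)) \<ge> (1/4) / \<rho> powr (1 + r)) at_top"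
  using eventually_ge_at_top[of 1]
proof eventually_elim
  case (elim \<rho>)
  have a: "\<rho> powr r * \<rho> = \<rho> powr (1 + r)" using elim by (simp add: powr_add)
  have b: "\<rho> powr r \<le> 1" using elim assms by (intro powr_le1_of_nonpos) auto
  have c: "1 \<le> \<rho> powr (1 + r)" using elim assms by (intro ge_one_powr_ge_zero) auto
  have "1 + 1 + \<rho> powr r * (1 + \<rho>) \<le> 4 * \<rho> powr (1 + r)" using a b c by (simp add: algebra_simps)
  hence "hda_loss (\<rho> powr r) \<rho> 1 \<ge> 1 / (4 * \<rho> powr (1 + r))" using elim by (intro wit_ng) auto
  then show ?case using elim by simp
qed

lemma W5:
  assumes "-1 < r" "r < 0"
  shows "eventually (\<lambda>\<rho>. hda_loss (\<rho> powr r) (1 * \<rho> powr (1 - (1 + r))) (1 * \<rho> powr (1 - 1)) \<ge> (1/4) / \<rho> powr 0) at_top"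
  using eventually_ge_at_top[of 1]
proof eventually_elim
  case (elim \<rho>)
  have a: "\<rho> powr r * \<rho> powr (-r) = 1" using elim by (simp add: powr_add[symmetric])
  have b: "\<rho> powr r \<le> 1" using elim assms by (intro powr_le1_of_nonpos) auto
  have "1 + 1 + \<rho> powr r * (1 + \<rho> powr (-r)) \<le> 4" using a b by (simp add: algebra_simps)
  hence "hda_loss (\<rho> powr r) (\<rho> powr (-r)) 1 \<ge> 1 / 4" using elim by (intro wit_ng) auto
  then show ?case using elim by simp
qed

lemma W6:
  shows "eventually (\<lambda>\<rho>. hda_loss (\<rho> powr 0) (1 * \<rho> powr (1 - 1)) (1 * \<rho> powr (1 - 1)) \<ge> (1/2) / \<rho> powr 0) at_top"
  using eventually_ge_at_top[of 1]
proof eventually_elim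
  case (elim \<rho>)
  have "hda_loss 1 1 1 \<ge> 1 / 2" by (intro wit_out) auto
  then show ?case using elim by simp
qed

lemma W7:
  shows "eventually (\<lambda>\<rho>. hda_loss (\<rho> powr 0) (1 * \<rho> powr (1 - 0)) (1 * \<rho> powr (1 - 2)) \<ge> (1/2) / \<rho> powr 0) at_top"
  using eventually_ge_at_top[of 1]
proof eventually_elim
  case (elim \<rho>)
  have g: "\<rho> powr (1 - 2) = 1 / \<rho>" using elim by (simp add: powr_minus divide_inverse)
  have "\<rho> * (1 + 1/\<rho>) \<le> 1 * (1 + \<rho>)" using elim by (simp add: field_simps)
  moreover have "1 + 1/\<rho> \<le> 2" using elim by (simp add: field_simps)
  ultimately have "hda_loss 1 \<rho> (1/\<rho>) \<ge> 1 / 2" using elim by (intro wit_out) auto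
  then show ?case using elim g by simp
qed

lemma W8:
  assumes "r > 0"
  shows "eventually (\<lambda>\<rho>. hda_loss (\<rho> powr r) (1 * \<rho> powr (1 - 0)) (1 * \<rho> powr (1 - 1)) \<ge> (1/2) / \<rho> powr 0) at_top"
  using eventually_ge_at_top[of 1] ev_powr_ge[OF assms, of 2, simplified]
proof eventually_elim
  case (elim \<rho>)
  have "2 * \<rho> \<le> \<rho> powr r * \<rho>" using elim by (intro mult_right_mono) auto
  hence "\<rho> * (1 + 1) \<le> \<rho> powr r * (1 + \<rho>)"
    by (simp add: algebra_simps) (rule add_increasing; simp)
  hence "hda_loss (\<rho> powr r) \<rho> 1 \<ge> 1 / 2" using elim by (intro wit_out) auto
  then show ?case using elim by simp
qed

lemma W9:
  assumes "0 < r" "r < 1"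
  shows "eventually (\<lambda>\<rho>. hda_loss (\<rho> powr r) (1 * \<rho> powr (1 - 0)) ((1/4) * \<rho> powr (1 - (1 - r))) \<ge> (1/2) / \<rho> powr r) at_top"
  using eventually_ge_at_top[of 1] ev_powr_ge[OF assms(1), of 2, simplified]
proof eventually_elim
  case (elim \<rho>)
  define e where "e = \<rho> powr r"
  have "2 * \<rho> \<le> e * \<rho>" using elim unfolding e_def by (intro mult_right_mono) auto
  hence "\<rho> \<le> (3/4) * (\<rho> * e)" using elim by (simp add: algebra_simps)
  hence "\<rho> * (1 + e/4) \<le> e * (1 + \<rho>)" unfolding e_def by (simp add: algebra_simps) (rule add_increasing; simp)
  moreover have "1 + e/4 \<le> 2 * e" using elim unfolding e_def by simp
  ultimately have "hda_loss e \<rho> (e/4) \<ge> 1 / (2 * e)" using elim unfolding e_def by (intro wit_out) auto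
  then show ?case using elim unfolding e_def by simp
qed

lemma W1p:
  assumes "0 < r"
  shows "eventually (\<lambda>\<rho>. hda_loss (\<rho> powr r) (1 * \<rho> powr (1 - 0)) (1 * \<rho> powr (1 - 0)) \<ge> (1/4) / \<rho> powr (1 + r)) at_top"
  using eventually_ge_at_top[of 1]
proof eventually_elim
  case (elim \<rho>)
  define e where "e = \<rho> powr r"
  have e1: "e \<ge> 1" using elim assms unfolding e_def by (intro ge_one_powr_ge_zero) auto
  have a: "\<rho> powr (1 + r) = e * \<rho>" using elim unfolding e_def by (simp add: powr_add)
  have "1 * \<rho> \<le> e * \<rho>" using e1 elim by (intro mult_right_mono) auto
  hence "1 + \<rho> \<le> 2 * (e * \<rho>)" using elim by linarith
  moreover have "e * 1 \<le> e * \<rho>" using e1 elim by (intro mult_left_mono) auto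
  ultimately have "1 + \<rho> + e * (1 + \<rho>) \<le> 4 * (e * \<rho>)" by (simp add: algebra_simps)
  hence "hda_loss e \<rho> \<rho> \<ge> 1 / (4 * (e * \<rho>))" using elim e1 by (intro wit_ng) auto
  then show ?case using elim a unfolding e_def by simp
qed

lemma W10:
  assumes "0 < r" "r < 1"
  shows "eventually (\<lambda>\<rho>. hda_loss (\<rho> powr r) (1 * \<rho> powr (1 - r)) (1 * \<rho> powr (1 - 0)) \<ge> (1/4) / \<rho> powr 1) at_top"
  using eventually_ge_at_top[of 1]
proof eventually_elim
  case (elim \<rho>)
  have a: "\<rho> powr r * \<rho> powr (1 - r) = \<rho>" using elim by (simp add: powr_add[symmetric])
  have b: "\<rho> powr r \<le> \<rho>" using elim assms powr_mono[of r 1 \<rho>] by simp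
  have "1 + \<rho> + \<rho> powr r * (1 + \<rho> powr (1 - r)) \<le> 4 * \<rho>" using a b elim by (simp add: algebra_simps)
  hence "hda_loss (\<rho> powr r) (\<rho> powr (1 - r)) \<rho> \<ge> 1 / (4 * \<rho>)" using elim by (intro wit_ng) auto
  then show ?case using elim by simp
qed

lemma W11:
  assumes "r \<ge> 1"
  shows "eventually (\<lambda>\<rho>. hda_loss (\<rho> powr r) (1 * \<rho> powr (1 - 0)) (1 * \<rho> powr (1 - 0)) \<ge> (1/2) / \<rho> powr 1) at_top"
  using eventually_ge_at_top[of 1]
proof eventually_elim
  case (elim \<rho>)
  have b: "\<rho> \<le> \<rho> powr r" using elim assms powr_mono[of 1 r \<rho>] by simp
  have "\<rho> * (1 + \<rho>) \<le> \<rho> powr r * (1 + \<rho>)" using b elim by (intro mult_right_mono) auto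
  moreover have "1 + \<rho> \<le> 2 * \<rho>" using elim by simp
  ultimately have "hda_loss (\<rho> powr r) \<rho> \<rho> \<ge> 1 / (2 * \<rho>)" using elim by (intro wit_out) auto
  then show ?case using elim by simp
qed


lemma le_mono3':
  assumes "\<rho> > 0" "x > 0" "y > 0" "N > 0" "c * ln \<rho> + s * ln x + t * ln y - K \<le> ln N"
  shows "1 / N \<le> mono3 K c s t \<rho> x y"
  by (rule le_mono3) (use assms in \<open>auto simp: ln_div\<close>)

lemma le_sum3: "u \<le> m1 \<or> u \<le> m2 \<or> u \<le> m3 \<Longrightarrow> 0 \<le> m1 \<Longrightarrow> 0 \<le> m2 \<Longrightarrow> 0 \<le> m3 \<Longrightarrow> u \<le> m1 + m2 + (m3::real)"
  by auto

lemma ln_ge_ln: "0 < (a::real) \<Longrightarrow> a \<le> b \<Longrightarrow> ln a \<le> ln b"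
  by simp

lemma pt_gen:
  assumes e: "e > 0" and r: "\<rho> > 0" and x: "x > 0" and y: "y > 0" and p: "0 \<le> p" "p \<le> 1"
  shows "hda_loss e (\<rho>*x) (\<rho>*y) \<le> mono3 0 p 0 p \<rho> x y"
proof -
  have N: "0 < 1 + \<rho>*y" using r y by (simp add: add_pos_pos)
  have a: "ln (\<rho>*y) \<le> ln (1 + \<rho>*y)" using r y by (intro ln_ge_ln) auto
  have b: "0 \<le> ln (1 + \<rho>*y)" using r y by simp
  have "p * (ln \<rho> + ln y) \<le> ln (1 + \<rho>*y)"
    using comb2[OF b _ _ p(1) order.refl, of "ln \<rho> + ln y" "0"] a p r y by (simp add: ln_mult)
  hence "1 / (1 + \<rho>*y) \<le> mono3 0 p 0 p \<rho> x y"
    by (intro le_mono3'[OF r x y N]) (simp add: algebra_simps)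
  then show ?thesis using loss_le[OF e, of "\<rho>*x" "\<rho>*y"] r x y by simp
qed


lemma ln_1g:
  fixes \<rho> y p :: real
  assumes r: "\<rho> > 0" and y: "y > 0" and p: "0 \<le> p" "p \<le> 1"
  shows "p * (ln \<rho> + ln y) \<le> ln (1 + \<rho>*y)"
proof -
  have a: "ln (\<rho>*y) \<le> ln (1 + \<rho>*y)" using r y by (intro ln_ge_ln) auto
  have b: "0 \<le> ln (1 + \<rho>*y)" using r y by simp
  show ?thesis
    using comb2[OF b _ _ p(1) order.refl, of "ln \<rho> + ln y" "0"] a p r y by (simp add: ln_mult)
qed

lemma pt_neg:
  fixes \<rho> x y p q a r :: real
  assumes e0: "\<rho> powr r \<le> 1/2" and r: "\<rho> > 0" and x: "x > 0" and y: "y > 0"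
    and p: "0 \<le> p" "p \<le> 1" and q: "0 \<le> q" "p + q \<le> 1" and a: "0 \<le> a"
  shows "hda_loss (\<rho> powr r) (\<rho>*x) (\<rho>*y) \<le> mono3 0 (p + q*(1+r)) q p \<rho> x y
     + mono3 (a * ln 2) (p + a*(1-r)) a p \<rho> x y + mono3 (a * ln 2) (p + a*(1-r)) a p \<rho> x y"
proof (rule le_sum3[OF _ mono3_pos mono3_pos mono3_pos])
  define e where "e = \<rho> powr r"
  define h where "h = \<rho> * x"
  define g where "g = \<rho> * y"
  have ep: "e > 0" using r unfolding e_def by simp
  have hp: "h > 0" "g > 0" using r x y unfolding h_def g_def by auto
  have le: "ln e = r * ln \<rho>" using r unfolding e_def by (simp add: ln_powr)
  have lh: "ln h = ln \<rho> + ln x" "ln g = ln \<rho> + ln y" using r x y unfolding h_def g_def by (simp_all add: ln_mult)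
  show "hda_loss e h g \<le> mono3 0 (p + q*(1+r)) q p \<rho> x y \<or>
        hda_loss e h g \<le> mono3 (a * ln 2) (p + a*(1-r)) a p \<rho> x y \<or>
        hda_loss e h g \<le> mono3 (a * ln 2) (p + a*(1-r)) a p \<rho> x y"
  proof (cases "h * (1 + g) \<le> e * (1 + h)")
    case True
    have "h \<le> h * (1 + g)" using hp by simp
    also have "\<dots> \<le> e * (1 + h)" by fact
    also have "\<dots> = e + e * h" by (simp add: algebra_simps)
    also have "e * h \<le> (1/2) * h" using e0 hp unfolding e_def by (intro mult_right_mono) auto
    hence "e + e * h \<le> e + h / 2" by simp
    finally have "h \<le> 2 * e" by simp
    hence "ln h \<le> ln (2 * e)" using hp by (intro ln_ge_ln) auto
    hence Q: "0 \<le> ln 2 + r * ln \<rho> - ln \<rho> - ln x" using ep lh le by (simp add: ln_mult)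
    have A: "p * (ln \<rho> + ln y) \<le> ln (1 + g)" using ln_1g[OF r y p] unfolding g_def .
    have "(p + a*(1-r)) * ln \<rho> + a * ln x + p * ln y - a * ln 2 = p * (ln \<rho> + ln y) - a * (ln 2 + r * ln \<rho> - ln \<rho> - ln x)"
      by (simp add: algebra_simps)
    also have "\<dots> \<le> ln (1 + g)" using A mult_nonneg_nonneg[OF a Q] by linarith
    finally have "1 / (1 + g) \<le> mono3 (a * ln 2) (p + a*(1-r)) a p \<rho> x y"
      using hp by (intro le_mono3'[OF r x y]) auto
    then show ?thesis using True by (simp add: hda_loss_def)
  next
    case False
    define N where "N = 1 + g + e * (1 + h)"
    have Np: "N > 0" using hp ep unfolding N_def by (simp add: add_pos_pos)
    have l0: "0 \<le> ln N" using hp ep unfolding N_def by simp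
    have l1: "ln g \<le> ln N" using hp ep unfolding N_def by (intro ln_ge_ln) auto
    have "e * h \<le> N" using hp ep unfolding N_def by (simp add: algebra_simps)
    hence l2: "ln (e * h) \<le> ln N" using hp ep by (intro ln_ge_ln) auto
    have "p * (ln \<rho> + ln y) + q * (ln (e*h)) \<le> ln N"
      using comb2[OF l0 _ l2 p(1) q] l1 lh by simp
    moreover have "ln (e*h) = r * ln \<rho> + (ln \<rho> + ln x)" using ep hp le lh by (simp add: ln_mult)
    ultimately have "(p + q*(1+r)) * ln \<rho> + q * ln x + p * ln y - 0 \<le> ln N"
      by (simp add: algebra_simps)
    hence "1 / N \<le> mono3 0 (p + q*(1+r)) q p \<rho> x y" by (intro le_mono3'[OF r x y Np])
    then show ?thesis using False unfolding N_def by (simp add: hda_loss_def)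
  qed
qed


lemma pt_zero:
  fixes \<rho> x y p q p2 b :: real
  assumes r: "\<rho> > 0" and x: "x > 0" and y: "y > 0"
    and p: "0 \<le> p" "p \<le> 1" and q: "0 \<le> q" "p + q \<le> 1" and p2: "0 \<le> p2" "p2 \<le> 1" and b: "0 \<le> b"
  shows "hda_loss (\<rho> powr 0) (\<rho>*x) (\<rho>*y) \<le> mono3 0 (p + q) q p \<rho> x y
     + mono3 0 (p2 + 2*b) b (p2 + b) \<rho> x y + mono3 0 (p2 + 2*b) b (p2 + b) \<rho> x y"
proof (rule le_sum3[OF _ mono3_pos mono3_pos mono3_pos])
  define h where "h = \<rho> * x"
  define g where "g = \<rho> * y"
  have hp: "h > 0" "g > 0" using r x y unfolding h_def g_def by auto
  have lh: "ln h = ln \<rho> + ln x" "ln g = ln \<rho> + ln y" using r x y unfolding h_def g_def by (simp_all add: ln_mult)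
  have e1: "\<rho> powr 0 = 1" using r by simp
  show "hda_loss (\<rho> powr 0) h g \<le> mono3 0 (p + q) q p \<rho> x y \<or>
        hda_loss (\<rho> powr 0) h g \<le> mono3 0 (p2 + 2*b) b (p2 + b) \<rho> x y \<or>
        hda_loss (\<rho> powr 0) h g \<le> mono3 0 (p2 + 2*b) b (p2 + b) \<rho> x y"
  proof (cases "h * (1 + g) \<le> 1 * (1 + h)")
    case True
    hence "h * g \<le> 1" by (simp add: algebra_simps)
    hence "ln (h * g) \<le> ln 1" using hp by (intro ln_ge_ln) auto
    hence Q: "0 \<le> - (2 * ln \<rho> + ln x + ln y)" using hp lh by (simp add: ln_mult)
    have A: "p2 * (ln \<rho> + ln y) \<le> ln (1 + g)" using ln_1g[OF r y p2] unfolding g_def .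
    have "(p2 + 2*b) * ln \<rho> + b * ln x + (p2 + b) * ln y - 0 = p2 * (ln \<rho> + ln y) - b * (- (2 * ln \<rho> + ln x + ln y))"
      by (simp add: algebra_simps)
    also have "\<dots> \<le> ln (1 + g)" using A mult_nonneg_nonneg[OF b Q] by linarith
    finally have "1 / (1 + g) \<le> mono3 0 (p2 + 2*b) b (p2 + b) \<rho> x y"
      using hp by (intro le_mono3'[OF r x y]) auto
    then show ?thesis using True r by (simp add: hda_loss_def e1)
  next
    case False
    define N where "N = 1 + g + 1 * (1 + h)"
    have Np: "N > 0" using hp unfolding N_def by (simp add: add_pos_pos)
    have l0: "0 \<le> ln N" using hp unfolding N_def by simp
    have l1: "ln g \<le> ln N" using hp unfolding N_def by (intro ln_ge_ln) auto
    have l2: "ln h \<le> ln N" using hp unfolding N_def by (intro ln_ge_ln) auto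
    have "p * (ln \<rho> + ln y) + q * (ln \<rho> + ln x) \<le> ln N"
      using comb2[OF l0 l1 l2 p(1) q] lh by simp
    hence "(p + q) * ln \<rho> + q * ln x + p * ln y - 0 \<le> ln N"
      by (simp add: algebra_simps)
    hence "1 / N \<le> mono3 0 (p + q) q p \<rho> x y" by (intro le_mono3'[OF r x y Np])
    then show ?thesis using False r unfolding N_def by (simp add: hda_loss_def e1)
  qed
qed

lemma pt_pos:
  fixes \<rho> x y p1 a1 yy z p q a r :: real
  assumes e0: "\<rho> powr r \<ge> 2" and r: "\<rho> > 0" and x: "x > 0" and y: "y > 0"
    and p1: "0 \<le> p1" "p1 \<le> 1" and a1: "0 \<le> a1" and yy: "0 \<le> yy" and z: "0 \<le> z"
    and p: "0 \<le> p" and q: "0 \<le> q" "p + q \<le> 1" and a: "0 \<le> a"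
  shows "hda_loss (\<rho> powr r) (\<rho>*x) (\<rho>*y) \<le> mono3 (a1 * ln 2) (p1 + a1*(1-r)) 0 (p1 + a1) \<rho> x y
     + mono3 ((yy - z) * ln 2) (1 + yy*(2-r) - z*(1-r)) yy (1 + yy - z) \<rho> x y
     + mono3 (a * ln 2) (p + q*(1+r) - a*(1-r)) q (p - a) \<rho> x y"
proof (rule le_sum3[OF _ mono3_pos mono3_pos mono3_pos])
  define e where "e = \<rho> powr r"
  define h where "h = \<rho> * x"
  define g where "g = \<rho> * y"
  have ep: "e > 0" using r unfolding e_def by simp
  have hp: "h > 0" "g > 0" using r x y unfolding h_def g_def by auto
  have le: "ln e = r * ln \<rho>" using r unfolding e_def by (simp add: ln_powr)
  have lh: "ln h = ln \<rho> + ln x" "ln g = ln \<rho> + ln y" using r x y unfolding h_def g_def by (simp_all add: ln_mult)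
  show "hda_loss e h g \<le> mono3 (a1 * ln 2) (p1 + a1*(1-r)) 0 (p1 + a1) \<rho> x y \<or>
        hda_loss e h g \<le> mono3 ((yy - z) * ln 2) (1 + yy*(2-r) - z*(1-r)) yy (1 + yy - z) \<rho> x y \<or>
        hda_loss e h g \<le> mono3 (a * ln 2) (p + q*(1+r) - a*(1-r)) q (p - a) \<rho> x y"
  proof (cases "h * (1 + g) \<le> e * (1 + h)")
    case True
    show ?thesis
    proof (cases "g \<le> 2 * e")
      case True2: True
      hence "ln g \<le> ln (2 * e)" using hp by (intro ln_ge_ln) auto
      hence Q: "0 \<le> ln 2 + r * ln \<rho> - ln \<rho> - ln y" using ep lh le by (simp add: ln_mult)
      have A: "p1 * (ln \<rho> + ln y) \<le> ln (1 + g)" using ln_1g[OF r y p1] unfolding g_def .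
      have "(p1 + a1*(1-r)) * ln \<rho> + 0 * ln x + (p1 + a1) * ln y - a1 * ln 2 = p1 * (ln \<rho> + ln y) - a1 * (ln 2 + r * ln \<rho> - ln \<rho> - ln y)"
        by (simp add: algebra_simps)
      also have "\<dots> \<le> ln (1 + g)" using A mult_nonneg_nonneg[OF a1 Q] by linarith
      finally have "1 / (1 + g) \<le> mono3 (a1 * ln 2) (p1 + a1*(1-r)) 0 (p1 + a1) \<rho> x y"
        using hp by (intro le_mono3'[OF r x y]) auto
      then show ?thesis using True by (simp add: hda_loss_def)
    next
      case False2: False
      have "h * (g / 2) \<le> h * (1 + g - e)" using hp False2 by (intro mult_left_mono) auto
      also have "\<dots> \<le> e" using True by (simp add: algebra_simps)
      finally have "h * g \<le> 2 * e" by simp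
      hence "ln (h * g) \<le> ln (2 * e)" using hp by (intro ln_ge_ln) auto
      hence Q2: "0 \<le> ln 2 + r * ln \<rho> - (2 * ln \<rho> + ln x + ln y)" using ep hp lh le by (simp add: ln_mult)
      have "ln (2 * e) \<le> ln g" using False2 ep by (intro ln_ge_ln) auto
      hence Q3: "0 \<le> ln \<rho> + ln y - ln 2 - r * ln \<rho>" using ep lh le by (simp add: ln_mult)
      have A: "1 * (ln \<rho> + ln y) \<le> ln (1 + g)" using ln_1g[OF r y, of 1] unfolding g_def by simp
      have "(1 + yy*(2-r) - z*(1-r)) * ln \<rho> + yy * ln x + (1 + yy - z) * ln y - (yy - z) * ln 2
          = 1 * (ln \<rho> + ln y) - yy * (ln 2 + r * ln \<rho> - (2 * ln \<rho> + ln x + ln y)) - z * (ln \<rho> + ln y - ln 2 - r * ln \<rho>)"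
        by (simp add: algebra_simps)
      also have "\<dots> \<le> ln (1 + g)" using A mult_nonneg_nonneg[OF yy Q2] mult_nonneg_nonneg[OF z Q3] by linarith
      finally have "1 / (1 + g) \<le> mono3 ((yy - z) * ln 2) (1 + yy*(2-r) - z*(1-r)) yy (1 + yy - z) \<rho> x y"
        using hp by (intro le_mono3'[OF r x y]) auto
      then show ?thesis using True by (simp add: hda_loss_def)
    qed
  next
    case False
    hence "h * (1 + g - e) > e" by (simp add: algebra_simps)
    hence "0 < h * (1 + g - e)" using ep by linarith
    hence "1 + g - e > 0" using hp(1) zero_less_mult_pos by blast
    hence "e / 2 \<le> g" using e0 unfolding e_def by simp
    hence "ln (e / 2) \<le> ln g" using ep by (intro ln_ge_ln) auto
    hence Q4: "0 \<le> ln \<rho> + ln y - r * ln \<rho> + ln 2" using ep lh le by (simp add: ln_div)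
    define N where "N = 1 + g + e * (1 + h)"
    have Np: "N > 0" using hp ep unfolding N_def by (simp add: add_pos_pos)
    have l0: "0 \<le> ln N" using hp ep unfolding N_def by simp
    have l1: "ln g \<le> ln N" using hp ep unfolding N_def by (intro ln_ge_ln) auto
    have "e * h \<le> N" using hp ep unfolding N_def by (simp add: algebra_simps)
    hence l2: "ln (e * h) \<le> ln N" using hp ep by (intro ln_ge_ln) auto
    have B: "p * (ln \<rho> + ln y) + q * (r * ln \<rho> + (ln \<rho> + ln x)) \<le> ln N"
      using comb2[OF l0 _ l2 p q] l1 lh ep hp le by (simp add: ln_mult)
    have "(p + q*(1+r) - a*(1-r)) * ln \<rho> + q * ln x + (p - a) * ln y - a * ln 2
       = p * (ln \<rho> + ln y) + q * (r * ln \<rho> + (ln \<rho> + ln x)) - a * (ln \<rho> + ln y - r * ln \<rho> + ln 2)"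
      by (simp add: algebra_simps)
    also have "\<dots> \<le> ln N" using B mult_nonneg_nonneg[OF a Q4] by linarith
    finally have "1 / N \<le> mono3 (a * ln 2) (p + q*(1+r) - a*(1-r)) q (p - a) \<rho> x y"
      by (intro le_mono3'[OF r x y Np])
    then show ?thesis using False unfolding N_def by (simp add: hda_loss_def)
  qed
qed


lemma upper_gen:
  assumes Lc: "Lc > 0" and Ls: "Ls > 0" and dl: "\<delta> > 0"
  shows "\<exists>C. eventually (\<lambda>\<rho>. ED_hda Lc Ls \<rho> (\<rho> powr r) \<le> C * \<rho> powr (-(min 1 Ls - \<delta>))) at_top"
proof -
  define d where "d = min \<delta> (Ls/2)"
  have d: "0 < d" "d \<le> \<delta>" "d < Ls" using dl Ls by (auto simp: d_def)
  define p where "p = min 1 (Ls - d)"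
  have p: "0 \<le> p" "p \<le> 1" "p < Ls" "p \<ge> min 1 Ls - \<delta>" using d by (auto simp: p_def)
  show ?thesis
  proof (rule upper_from_pointwise[OF Lc Ls])
    show "eventually (\<lambda>\<rho>. \<forall>x y. x > 0 \<longrightarrow> y > 0 \<longrightarrow> hda_loss (\<rho> powr r) (\<rho>*x) (\<rho>*y) \<le>
        mono3 0 p 0 p \<rho> x y + mono3 0 p 0 p \<rho> x y + mono3 0 p 0 p \<rho> x y) at_top"
      using eventually_gt_at_top[of 0]
    proof eventually_elim
      case (elim \<rho>)
      show ?case
      proof (intro allI impI)
        fix x y :: real assume "x > 0" "y > 0"
        then have "hda_loss (\<rho> powr r) (\<rho>*x) (\<rho>*y) \<le> mono3 0 p 0 p \<rho> x y"
          using elim p by (intro pt_gen) auto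
        then show "hda_loss (\<rho> powr r) (\<rho>*x) (\<rho>*y) \<le> mono3 0 p 0 p \<rho> x y + mono3 0 p 0 p \<rho> x y + mono3 0 p 0 p \<rho> x y"
          using mono3_pos[of 0 p 0 p \<rho> x y] by linarith
      qed
    qed
  qed (use p Lc in auto)
qed

lemma ev_powr_le_half:
  fixes r :: real assumes "r < 0"
  shows "eventually (\<lambda>\<rho>. \<rho> powr r \<le> 1/2) at_top"
proof -
  have "eventually (\<lambda>\<rho>. \<rho> powr (-r) \<ge> 2) at_top" using ev_powr_ge[of "-r" 2] assms by simp
  with eventually_gt_at_top[of 0] show ?thesis
  proof eventually_elim
    case (elim \<rho>)
    have "\<rho> powr r = 1 / \<rho> powr (-r)" using elim by (simp add: powr_minus_divide)
    also have "\<dots> \<le> 1 / 2" using elim by (intro divide_left_mono) auto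
    finally show ?case .
  qed
qed




lemma upper_neg:
  assumes Lc: "Lc > 0" and Ls: "Ls > 0" and dl: "\<delta> > 0" and r: "-1 < r" "r < 0"
  shows "\<exists>C. eventually (\<lambda>\<rho>. ED_hda Lc Ls \<rho> (\<rho> powr r) \<le> C * \<rho> powr (-(min 1 (min (1 + r*(1-Ls)) (Ls + min 1 Lc * (1+r))) - \<delta>))) at_top"
proof -
  define D where "D = min 1 (min (1 + r*(1-Ls)) (Ls + min 1 Lc * (1+r)))"
  define d where "d = min (\<delta>/2) (min (Ls/2) (Lc/2))"
  have d: "0 < d" "2*d \<le> \<delta>" "d < Ls" "d < Lc" using dl Ls Lc by (auto simp: d_def)
  define p where "p = min 1 (Ls - d)"
  define q where "q = min (Lc - d) (1 - p)"
  define a where "a = Lc - d"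
  have p: "0 \<le> p" "p \<le> 1" "p < Ls" using d by (auto simp: p_def)
  have q: "0 \<le> q" "p + q \<le> 1" "q < Lc" using d p by (auto simp: q_def)
  have a: "0 \<le> a" "a < Lc" using d by (auto simp: a_def)
  have D1: "D \<le> 1" "D \<le> 1 + r*(1-Ls)" "D \<le> Ls + min 1 Lc * (1+r)" by (auto simp: D_def)
  have mle: "min 1 Lc * (1+r) \<le> Lc * (1+r)" using r by (intro mult_right_mono) auto
  have c1: "p + q*(1+r) \<ge> D - \<delta>"
  proof (cases "p = 1")
    case True
    have "0 \<le> q*(1+r)" using q r by (intro mult_nonneg_nonneg) auto
    then show ?thesis using D1 True dl by linarith
  next
    case False
    then have pe: "p = Ls - d" by (auto simp: p_def)
    show ?thesis
    proof (cases "q = Lc - d")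
      case True
      have "q * (1+r) = Lc * (1+r) - d * (1+r)" by (subst True) (simp add: left_diff_distrib)
      moreover have "d * (1+r) \<le> d * 1" using d r by (intro mult_left_mono) auto
      ultimately show ?thesis using pe D1 mle d by linarith
    next
      case False
      then have qe: "q = 1 - p" by (auto simp: q_def)
      have "p + q*(1+r) = 1 + r*(1-Ls) + r*d" unfolding qe pe by (simp add: algebra_simps)
      moreover have "r*d \<ge> -1 * d" using r d by (intro mult_right_mono) auto
      ultimately show ?thesis using D1 d by linarith
    qed
  qed
  have c2: "p + a*(1-r) \<ge> D - \<delta>"
  proof (cases "p = 1")
    case True
    have "0 \<le> a*(1-r)" using a r by (intro mult_nonneg_nonneg) auto
    then show ?thesis using D1 True dl by linarith
  next
    case False
    then have pe: "p = Ls - d" by (auto simp: p_def)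
    have "a*(1+r) \<le> a*(1-r)" using a r by (intro mult_left_mono) auto
    moreover have "a * (1+r) = Lc * (1+r) - d * (1+r)" by (simp add: a_def algebra_simps)
    moreover have "d * (1+r) \<le> d * 1" using d r by (intro mult_left_mono) auto
    ultimately show ?thesis using pe D1 mle d by linarith
  qed
  have "\<exists>C. eventually (\<lambda>\<rho>. ED_hda Lc Ls \<rho> (\<rho> powr r) \<le> C * \<rho> powr (-(D - \<delta>))) at_top"
  proof (rule upper_from_pointwise[OF Lc Ls])
    show "eventually (\<lambda>\<rho>. \<forall>x y. x > 0 \<longrightarrow> y > 0 \<longrightarrow> hda_loss (\<rho> powr r) (\<rho>*x) (\<rho>*y) \<le>
        mono3 0 (p + q*(1+r)) q p \<rho> x y + mono3 (a * ln 2) (p + a*(1-r)) a p \<rho> x y + mono3 (a * ln 2) (p + a*(1-r)) a p \<rho> x y) at_top"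
      using eventually_gt_at_top[of 0] ev_powr_le_half[OF r(2)]
    proof eventually_elim
      case (elim \<rho>)
      show ?case using elim p q a by (intro allI impI pt_neg) auto
    qed
  qed (use p q a c1 c2 in auto)
  then show ?thesis unfolding D_def .
qed



lemma upper_zero:
  assumes Lc: "Lc > 0" and Ls: "Ls > 0" and dl: "\<delta> > 0"
  shows "\<exists>C. eventually (\<lambda>\<rho>. ED_hda Lc Ls \<rho> (\<rho> powr 0) \<le> C * \<rho> powr (-(min 1 (min (Lc + Ls) (2*Ls)) - \<delta>))) at_top"
proof -
  define D where "D = min 1 (min (Lc + Ls) (2*Ls))"
  define d where "d = min (\<delta>/2) (min (Ls/2) (Lc/2))"
  have d: "0 < d" "2*d \<le> \<delta>" "d < Ls" "d < Lc" using dl Ls Lc by (auto simp: d_def)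
  define p where "p = min 1 (Ls - d)"
  define q where "q = min (Lc - d) (1 - p)"
  define b where "b = min Lc Ls - d"
  define p2 where "p2 = min 1 (Ls - min Lc Ls)"
  have p: "0 \<le> p" "p \<le> 1" "p < Ls" using d by (auto simp: p_def)
  have q: "0 \<le> q" "p + q \<le> 1" "q < Lc" using d p by (auto simp: q_def)
  have b: "0 \<le> b" "b < Lc" using d by (auto simp: b_def)
  have p2: "0 \<le> p2" "p2 \<le> 1" "p2 + b < Ls" using d by (auto simp: p2_def b_def)
  have D1: "D \<le> 1" "D \<le> Lc + Ls" "D \<le> 2 * Ls" by (auto simp: D_def)
  have c1: "p + q \<ge> D - \<delta>"
  proof (cases "p = 1")
    case True then show ?thesis using D1 q dl by linarith
  next
    case False
    then have pe: "p = Ls - d" by (auto simp: p_def)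
    show ?thesis
    proof (cases "q = Lc - d")
      case True then show ?thesis using pe D1 d by linarith
    next
      case False
      then have "q = 1 - p" by (auto simp: q_def)
      then show ?thesis using D1 d by linarith
    qed
  qed
  have c2: "p2 + 2*b \<ge> D - \<delta>"
  proof (cases "Lc \<le> Ls")
    case True
    then have "b = Lc - d" "p2 = min 1 (Ls - Lc)" by (auto simp: b_def p2_def)
    then show ?thesis using D1 d b by (cases "Ls - Lc \<le> 1") (auto simp: min_def)
  next
    case False
    then have "b = Ls - d" "p2 = 0" by (auto simp: b_def p2_def)
    then show ?thesis using D1 d by linarith
  qed
  have "\<exists>C. eventually (\<lambda>\<rho>. ED_hda Lc Ls \<rho> (\<rho> powr 0) \<le> C * \<rho> powr (-(D - \<delta>))) at_top"
  proof (rule upper_from_pointwise[OF Lc Ls])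
    show "eventually (\<lambda>\<rho>. \<forall>x y. x > 0 \<longrightarrow> y > 0 \<longrightarrow> hda_loss (\<rho> powr 0) (\<rho>*x) (\<rho>*y) \<le>
        mono3 0 (p + q) q p \<rho> x y + mono3 0 (p2 + 2*b) b (p2 + b) \<rho> x y + mono3 0 (p2 + 2*b) b (p2 + b) \<rho> x y) at_top"
      using eventually_gt_at_top[of 0]
    proof eventually_elim
      case (elim \<rho>)
      show ?case using elim p q b p2 by (intro allI impI pt_zero) auto
    qed
  qed (use p q b p2 c1 c2 in auto)
  then show ?thesis unfolding D_def .
qed

lemma upper_pos:
  assumes Lc: "Lc > 0" and Ls: "Ls > 0" and dl: "\<delta> > 0" and r: "0 < r" "r < 1"
  shows "\<exists>C. eventually (\<lambda>\<rho>. ED_hda Lc Ls \<rho> (\<rho> powr r) \<le> C * \<rho> powr (-(min Ls (min (r + Ls*(1-r)) (1 + min 1 Lc * r)) - \<delta>))) at_top"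
proof -
  define m where "m = min 1 Lc"
  have m: "0 < m" "m \<le> 1" "m \<le> Lc" using Lc by (auto simp: m_def)
  define D where "D = min Ls (min (r + Ls*(1-r)) (1 + m * r))"
  define d where "d = min (\<delta>/2) (min (Ls/2) (m/2))"
  have d: "0 < d" "d \<le> \<delta>" "d < Ls" "d < m" using dl Ls m by (auto simp: d_def)
  have D1: "D \<le> Ls" "D \<le> r + Ls*(1-r)" "D \<le> 1 + m * r" by (auto simp: D_def)
  define p1 where "p1 = min 1 (Ls - d)"
  define a1 where "a1 = Ls - d - p1"
  define yy where "yy = Lc - d"
  define z where "z = max 0 (yy + 1 - (Ls - d))"
  define q where "q = m - d"
  define p where "p = 1 - q"
  define a where "a = max 0 (p - (Ls - d))"
  have p1: "0 \<le> p1" "p1 \<le> 1" and a1: "0 \<le> a1" and yy: "0 \<le> yy" "yy < Lc" and z: "0 \<le> z"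
    and q: "0 \<le> q" "q < Lc" and p: "0 \<le> p" "p + q \<le> 1" and a: "0 \<le> a"
    using d m by (auto simp: p1_def a1_def yy_def z_def q_def p_def a_def)
  have t: "p1 + a1 < Ls" "1 + yy - z < Ls" "p - a < Ls" using d by (auto simp: a1_def z_def a_def)
  have c1: "p1 + a1*(1-r) \<ge> D - \<delta>"
  proof (cases "p1 = 1")
    case True
    have "p1 + a1*(1-r) = r + Ls*(1-r) - d*(1-r)" unfolding a1_def True by (simp add: algebra_simps)
    moreover have "d*(1-r) \<le> d*1" using d r by (intro mult_left_mono) auto
    ultimately show ?thesis using D1 d by linarith
  next
    case False
    then have "p1 = Ls - d" by (auto simp: p1_def)
    then have "a1 = 0" by (simp add: a1_def)
    then show ?thesis using \<open>p1 = Ls - d\<close> D1 d by simp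
  qed
  have c2: "1 + yy*(2-r) - z*(1-r) \<ge> D - \<delta>"
  proof (cases "z = 0")
    case True
    have "yy * r \<le> yy * (2-r)" using yy r by (intro mult_left_mono) auto
    moreover have "yy * r = Lc * r - d * r" by (simp add: yy_def algebra_simps)
    moreover have "m * r \<le> Lc * r" using m r by (intro mult_right_mono) auto
    moreover have "d * r \<le> d * 1" using d r by (intro mult_left_mono) auto
    moreover have "z*(1-r) = 0" using True by simp
    ultimately show ?thesis using D1 d by linarith
  next
    case False
    then have ze: "z = yy + 1 - (Ls - d)" by (auto simp: z_def)
    have "1 + yy*(2-r) - z*(1-r) = r + Ls*(1-r) + yy - d*(1-r)" unfolding ze by (simp add: algebra_simps)
    moreover have "d*(1-r) \<le> d*1" using d r by (intro mult_left_mono) auto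
    ultimately show ?thesis using D1 d yy by linarith
  qed
  have c3: "p + q*(1+r) - a*(1-r) \<ge> D - \<delta>"
  proof (cases "a = 0")
    case True
    have "p + q*(1+r) - a*(1-r) = 1 + m*r - d*r" unfolding True p_def q_def by (simp add: algebra_simps)
    moreover have "d * r \<le> d * 1" using d r by (intro mult_left_mono) auto
    ultimately show ?thesis using D1 d by linarith
  next
    case False
    then have ae: "a = p - (Ls - d)" by (auto simp: a_def)
    have "p + q*(1+r) - a*(1-r) = r + q + Ls*(1-r) - d*(1-r)" unfolding ae p_def by (simp add: algebra_simps)
    moreover have "d*(1-r) \<le> d*1" using d r by (intro mult_left_mono) auto
    ultimately show ?thesis using D1 d q by linarith
  qed
  have "\<exists>C. eventually (\<lambda>\<rho>. ED_hda Lc Ls \<rho> (\<rho> powr r) \<le> C * \<rho> powr (-(D - \<delta>))) at_top"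
  proof (rule upper_from_pointwise[OF Lc Ls])
    show "eventually (\<lambda>\<rho>. \<forall>x y. x > 0 \<longrightarrow> y > 0 \<longrightarrow> hda_loss (\<rho> powr r) (\<rho>*x) (\<rho>*y) \<le>
        mono3 (a1 * ln 2) (p1 + a1*(1-r)) 0 (p1 + a1) \<rho> x y
     + mono3 ((yy - z) * ln 2) (1 + yy*(2-r) - z*(1-r)) yy (1 + yy - z) \<rho> x y
     + mono3 (a * ln 2) (p + q*(1+r) - a*(1-r)) q (p - a) \<rho> x y) at_top"
      using eventually_gt_at_top[of 0] ev_powr_ge[OF r(1), of 2, simplified]
    proof eventually_elim
      case (elim \<rho>)
      show ?case using elim p1 a1 yy z p q a by (intro allI impI pt_pos) auto
    qed
  qed (use Lc t yy q c1 c2 c3 in auto)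
  then show ?thesis unfolding D_def m_def .
qed


definition Dl :: "real \<Rightarrow> real \<Rightarrow> real \<Rightarrow> real" where
  "Dl Lc Ls r = (if r \<le> -1 then min 1 Ls
     else if r < 0 then min 1 (min (1 + r*(1-Ls)) (Ls + min 1 Lc * (1+r)))
     else if r = 0 then min 1 (min (Lc + Ls) (2*Ls))
     else if r < 1 then min Ls (min (r + Ls*(1-r)) (1 + min 1 Lc * r))
     else min 1 Ls)"

lemma lower_eq: "\<exists>c>0. eventually (\<lambda>\<rho>. f \<rho> \<ge> c * \<rho> powr (-T)) at_top \<Longrightarrow> T = T' \<Longrightarrow>
   \<exists>c>0. eventually (\<lambda>\<rho>. f \<rho> \<ge> c * \<rho> powr (-T')) at_top"
  by simp

lemma lim_regime:
  assumes Lc: "Lc > 0" and Ls: "Ls > 0"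
    and low: "\<exists>c>0. eventually (\<lambda>\<rho>. ED_hda Lc Ls \<rho> (\<rho> powr r) \<ge> c * \<rho> powr (-D)) at_top"
    and up: "\<And>\<delta>. \<delta> > 0 \<Longrightarrow> \<exists>C. eventually (\<lambda>\<rho>. ED_hda Lc Ls \<rho> (\<rho> powr r) \<le> C * \<rho> powr (-(D - \<delta>))) at_top"
  shows "((\<lambda>\<rho>. - ln (ED_hda Lc Ls \<rho> (\<rho> powr r)) / ln \<rho>) \<longlongrightarrow> D) at_top"
  by (rule exponent_limit[OF low up])

lemma lim_le_m1:
  assumes Lc: "Lc > 0" and Ls: "Ls > 0" and r: "r \<le> -1"
  shows "((\<lambda>\<rho>. - ln (ED_hda Lc Ls \<rho> (\<rho> powr r)) / ln \<rho>) \<longlongrightarrow> min 1 Ls) at_top"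
proof (rule lim_regime[OF Lc Ls])
  have r0: "r \<le> 0" using r by simp
  have l1: "\<exists>c>0. eventually (\<lambda>\<rho>. ED_hda Lc Ls \<rho> (\<rho> powr r) \<ge> c * \<rho> powr (-(Lc*0 + Ls*0 + 1))) at_top"
    by (rule lower_gen[OF Lc Ls _ _ _ _ _ _ _ W1[OF r0]]) auto
  have l2: "\<exists>c>0. eventually (\<lambda>\<rho>. ED_hda Lc Ls \<rho> (\<rho> powr r) \<ge> c * \<rho> powr (-(Lc*0 + Ls*1 + 0))) at_top"
    by (rule lower_gen[OF Lc Ls _ _ _ _ _ _ _ W2[OF r]]) auto
  show "\<exists>c>0. eventually (\<lambda>\<rho>. ED_hda Lc Ls \<rho> (\<rho> powr r) \<ge> c * \<rho> powr (-(min 1 Ls))) at_top"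
    using lower_min[OF l1 l2] by simp
qed (rule upper_gen[OF Lc Ls])

lemma lim_ge_1:
  assumes Lc: "Lc > 0" and Ls: "Ls > 0" and r: "r \<ge> 1"
  shows "((\<lambda>\<rho>. - ln (ED_hda Lc Ls \<rho> (\<rho> powr r)) / ln \<rho>) \<longlongrightarrow> min 1 Ls) at_top"
proof (rule lim_regime[OF Lc Ls])
  have r0: "r > 0" using r by simp
  have l1: "\<exists>c>0. eventually (\<lambda>\<rho>. ED_hda Lc Ls \<rho> (\<rho> powr r) \<ge> c * \<rho> powr (-(Lc*0 + Ls*0 + 1))) at_top"
    by (rule lower_gen[OF Lc Ls _ _ _ _ _ _ _ W11[OF r]]) auto
  have l2: "\<exists>c>0. eventually (\<lambda>\<rho>. ED_hda Lc Ls \<rho> (\<rho> powr r) \<ge> c * \<rho> powr (-(Lc*0 + Ls*1 + 0))) at_top"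
    by (rule lower_gen[OF Lc Ls _ _ _ _ _ _ _ W8[OF r0]]) auto
  show "\<exists>c>0. eventually (\<lambda>\<rho>. ED_hda Lc Ls \<rho> (\<rho> powr r) \<ge> c * \<rho> powr (-(min 1 Ls))) at_top"
    using lower_min[OF l1 l2] by simp
qed (rule upper_gen[OF Lc Ls])

lemma lim_neg:
  assumes Lc: "Lc > 0" and Ls: "Ls > 0" and r: "-1 < r" "r < 0"
  shows "((\<lambda>\<rho>. - ln (ED_hda Lc Ls \<rho> (\<rho> powr r)) / ln \<rho>) \<longlongrightarrow> min 1 (min (1 + r*(1-Ls)) (Ls + min 1 Lc * (1+r)))) at_top"
proof (rule lim_regime[OF Lc Ls])
  have r0: "r \<le> 0" using r by simp
  have l1: "\<exists>c>0. eventually (\<lambda>\<rho>. ED_hda Lc Ls \<rho> (\<rho> powr r) \<ge> c * \<rho> powr (-(Lc*0 + Ls*0 + 1))) at_top"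
    by (rule lower_gen[OF Lc Ls _ _ _ _ _ _ _ W1[OF r0]]) auto
  have l3: "\<exists>c>0. eventually (\<lambda>\<rho>. ED_hda Lc Ls \<rho> (\<rho> powr r) \<ge> c * \<rho> powr (-(Lc*0 + Ls*(-r) + (1 + r)))) at_top"
    by (rule lower_gen[OF Lc Ls _ _ _ _ _ _ _ W3[OF r]]) (use r in auto)
  have l4: "\<exists>c>0. eventually (\<lambda>\<rho>. ED_hda Lc Ls \<rho> (\<rho> powr r) \<ge> c * \<rho> powr (-(Lc*0 + Ls*1 + (1 + r)))) at_top"
    by (rule lower_gen[OF Lc Ls _ _ _ _ _ _ _ W4[OF r]]) auto
  have l5: "\<exists>c>0. eventually (\<lambda>\<rho>. ED_hda Lc Ls \<rho> (\<rho> powr r) \<ge> c * \<rho> powr (-(Lc*(1+r) + Ls*1 + 0))) at_top"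
    by (rule lower_gen[OF Lc Ls _ _ _ _ _ _ _ W5[OF r]]) (use r in auto)
  have e: "min (Lc*0 + Ls*0 + 1) (min (Lc*0 + Ls*(-r) + (1 + r)) (min (Lc*0 + Ls*1 + (1 + r)) (Lc*(1+r) + Ls*1 + 0)))
        = min 1 (min (1 + r*(1-Ls)) (Ls + min 1 Lc * (1+r)))"
  proof (cases "Lc \<le> 1")
    case True
    have "Lc * (1+r) \<le> 1 * (1+r)" using True r by (intro mult_right_mono) auto
    then show ?thesis using True by (simp add: min_def algebra_simps)
  next
    case False
    have "Lc * (1+r) \<ge> 1 * (1+r)" using False r by (intro mult_right_mono) auto
    then show ?thesis using False by (simp add: min_def algebra_simps)
  qed
  show "\<exists>c>0. eventually (\<lambda>\<rho>. ED_hda Lc Ls \<rho> (\<rho> powr r) \<ge> c * \<rho> powr (-(min 1 (min (1 + r*(1-Ls)) (Ls + min 1 Lc * (1+r)))))) at_top"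
    by (rule lower_eq[OF lower_min[OF l1 lower_min[OF l3 lower_min[OF l4 l5]]] e])
qed (rule upper_neg[OF Lc Ls _ r])

lemma lim_zero:
  assumes Lc: "Lc > 0" and Ls: "Ls > 0"
  shows "((\<lambda>\<rho>. - ln (ED_hda Lc Ls \<rho> (\<rho> powr 0)) / ln \<rho>) \<longlongrightarrow> min 1 (min (Lc + Ls) (2*Ls))) at_top"
proof (rule lim_regime[OF Lc Ls])
  have r0: "(0::real) \<le> 0" by simp
  have l1: "\<exists>c>0. eventually (\<lambda>\<rho>. ED_hda Lc Ls \<rho> (\<rho> powr 0) \<ge> c * \<rho> powr (-(Lc*0 + Ls*0 + 1))) at_top"
    by (rule lower_gen[OF Lc Ls _ _ _ _ _ _ _ W1[OF r0]]) auto
  have l6: "\<exists>c>0. eventually (\<lambda>\<rho>. ED_hda Lc Ls \<rho> (\<rho> powr 0) \<ge> c * \<rho> powr (-(Lc*1 + Ls*1 + 0))) at_top"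
    by (rule lower_gen[OF Lc Ls _ _ _ _ _ _ _ W6]) auto
  have l7: "\<exists>c>0. eventually (\<lambda>\<rho>. ED_hda Lc Ls \<rho> (\<rho> powr 0) \<ge> c * \<rho> powr (-(Lc*0 + Ls*2 + 0))) at_top"
    by (rule lower_gen[OF Lc Ls _ _ _ _ _ _ _ W7]) auto
  show "\<exists>c>0. eventually (\<lambda>\<rho>. ED_hda Lc Ls \<rho> (\<rho> powr 0) \<ge> c * \<rho> powr (-(min 1 (min (Lc + Ls) (2*Ls))))) at_top"
    by (rule lower_eq[OF lower_min[OF l1 lower_min[OF l6 l7]]]) (simp add: algebra_simps)
qed (rule upper_zero[OF Lc Ls])

lemma lim_pos:
  assumes Lc: "Lc > 0" and Ls: "Ls > 0" and r: "0 < r" "r < 1"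
  shows "((\<lambda>\<rho>. - ln (ED_hda Lc Ls \<rho> (\<rho> powr r)) / ln \<rho>) \<longlongrightarrow> min Ls (min (r + Ls*(1-r)) (1 + min 1 Lc * r))) at_top"
proof (rule lim_regime[OF Lc Ls])
  have l8: "\<exists>c>0. eventually (\<lambda>\<rho>. ED_hda Lc Ls \<rho> (\<rho> powr r) \<ge> c * \<rho> powr (-(Lc*0 + Ls*1 + 0))) at_top"
    by (rule lower_gen[OF Lc Ls _ _ _ _ _ _ _ W8[OF r(1)]]) auto
  have l9: "\<exists>c>0. eventually (\<lambda>\<rho>. ED_hda Lc Ls \<rho> (\<rho> powr r) \<ge> c * \<rho> powr (-(Lc*0 + Ls*(1-r) + r))) at_top"
    by (rule lower_gen[OF Lc Ls _ _ _ _ _ _ _ W9[OF r]]) (use r in auto)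
  have l1: "\<exists>c>0. eventually (\<lambda>\<rho>. ED_hda Lc Ls \<rho> (\<rho> powr r) \<ge> c * \<rho> powr (-(Lc*0 + Ls*0 + (1 + r)))) at_top"
    by (rule lower_gen[OF Lc Ls _ _ _ _ _ _ _ W1p[OF r(1)]]) auto
  have l10: "\<exists>c>0. eventually (\<lambda>\<rho>. ED_hda Lc Ls \<rho> (\<rho> powr r) \<ge> c * \<rho> powr (-(Lc*r + Ls*0 + 1))) at_top"
    by (rule lower_gen[OF Lc Ls _ _ _ _ _ _ _ W10[OF r]]) (use r in auto)
  have e: "min (Lc*0 + Ls*1 + 0) (min (Lc*0 + Ls*(1-r) + r) (min (Lc*0 + Ls*0 + (1 + r)) (Lc*r + Ls*0 + 1)))
        = min Ls (min (r + Ls*(1-r)) (1 + min 1 Lc * r))"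
  proof (cases "Lc \<le> 1")
    case True
    have "Lc * r \<le> 1 * r" using True r by (intro mult_right_mono) auto
    then show ?thesis using True by (simp add: min_def algebra_simps)
  next
    case False
    have "Lc * r \<ge> 1 * r" using False r by (intro mult_right_mono) auto
    then show ?thesis using False by (simp add: min_def algebra_simps)
  qed
  show "\<exists>c>0. eventually (\<lambda>\<rho>. ED_hda Lc Ls \<rho> (\<rho> powr r) \<ge> c * \<rho> powr (-(min Ls (min (r + Ls*(1-r)) (1 + min 1 Lc * r))))) at_top"
    by (rule lower_eq[OF lower_min[OF l8 lower_min[OF l9 lower_min[OF l1 l10]]] e])
qed (rule upper_pos[OF Lc Ls _ r])

lemma lim_all:
  assumes Lc: "Lc > 0" and Ls: "Ls > 0"
  shows "((\<lambda>\<rho>. - ln (ED_hda Lc Ls \<rho> (\<rho> powr r)) / ln \<rho>) \<longlongrightarrow> Dl Lc Ls r) at_top"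
proof -
  consider "r \<le> -1" | "-1 < r" "r < 0" | "r = 0" | "0 < r" "r < 1" | "r \<ge> 1" by linarith
  then show ?thesis
  proof cases
    case 1 then show ?thesis using lim_le_m1[OF Lc Ls] by (simp add: Dl_def)
  next
    case 2 then show ?thesis using lim_neg[OF Lc Ls] by (simp add: Dl_def)
  next
    case 3 then show ?thesis using lim_zero[OF Lc Ls] by (simp add: Dl_def)
  next
    case 4 then show ?thesis using lim_pos[OF Lc Ls] by (simp add: Dl_def)
  next
    case 5 then show ?thesis using lim_ge_1[OF Lc Ls] by (simp add: Dl_def)
  qed
qed


lemma hda_exponent_eq:
  assumes Lc: "Lc > 0" and Ls: "Ls > 0"
  shows "hda_exponent Lc Ls r = Dl Lc Ls r"
  unfolding hda_exponent_def by (rule tendsto_Lim[OF trivial_limit_at_top_linorder lim_all[OF Lc Ls]])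

lemma sup_small:
  assumes Lc: "Lc > 0" and Ls: "Ls > 0" and y: "\<And>r. Dl Lc Ls r \<le> y"
  shows "min 1 (Ls + Lc) \<le> y"
proof (rule ccontr)
  assume "\<not> min 1 (Ls + Lc) \<le> y"
  hence yl: "y < min 1 (Ls + Lc)" by linarith
  define F where "F = min 1 (Ls + Lc)"
  define m where "m = min 1 Lc"
  define t where "t = min (1/2) ((F - y)/2)"
  have Fy: "0 < F - y" unfolding F_def using yl by linarith
  have t3: "t \<le> (F - y)/2" unfolding t_def by (rule min.cobounded2)
  have t: "0 < t" "t \<le> 1/2" "t < F - y" using t3 Fy by (auto simp: t_def)
  have F: "F \<le> 1" "F \<le> Ls + m" using Lc Ls by (auto simp: F_def m_def min_def)
  have m: "0 < m" "m \<le> 1" using Lc by (auto simp: m_def)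
  have eq: "Dl Lc Ls (-t) = min 1 (min (1 + (-t)*(1-Ls)) (Ls + m * (1 + (-t))))"
    using t by (simp add: Dl_def m_def)
  have A: "1 + (-t)*(1-Ls) \<ge> 1 - t"
  proof -
    have "t * (1 - Ls) \<le> t * 1" using t Ls by (intro mult_left_mono) auto
    then show ?thesis by (simp add: algebra_simps)
  qed
  have B: "m * (1 + (-t)) \<ge> m - t"
  proof -
    have "m * t \<le> 1 * t" using m t by (intro mult_right_mono) auto
    then show ?thesis by (simp add: algebra_simps)
  qed
  have "F - t \<le> Dl Lc Ls (-t)" unfolding eq
    by (intro min.boundedI) (use A B F t in linarith)+
  with t y[of "-t"] show False by linarith
qed

lemma sup_Dl:
  assumes Lc: "Lc > 0" and Ls: "Ls > 0"
  shows "(SUP r. Dl Lc Ls r) = min 1 (Ls + Lc) + min 1 Lc * max 0 (Ls - 1) / (Ls - 1 + min 1 Lc)"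
proof -
  define m where "m = min 1 Lc"
  have m: "0 < m" "m \<le> 1" "m \<le> Lc" using Lc by (auto simp: m_def)
  show ?thesis
  proof (cases "Ls \<le> 1")
    case True
    have F: "min 1 Lc * max 0 (Ls - 1) / (Ls - 1 + min 1 Lc) = 0" using True by simp
    show ?thesis unfolding F
    proof (simp, rule cSup_eq_non_empty)
      show "range (Dl Lc Ls) \<noteq> {}" by simp
      fix x assume "x \<in> range (Dl Lc Ls)"
      then obtain r where x: "x = Dl Lc Ls r" by auto
      have "Dl Lc Ls r \<le> min 1 (Ls + Lc)"
      proof -
        consider "r \<le> -1" | "-1 < r" "r < 0" | "r = 0" | "0 < r" "r < 1" | "r \<ge> 1" by linarith
        then show ?thesis
        proof cases
          case 2
          have "m * (1 + r) \<le> m * 1" using m 2 by (intro mult_left_mono) auto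
          hence B: "Ls + m * (1 + r) \<le> Ls + Lc" using m by linarith
          have e: "Dl Lc Ls r = min 1 (min (1 + r*(1-Ls)) (Ls + m*(1+r)))" using 2 by (simp add: Dl_def m_def)
          show ?thesis unfolding e using B by (simp add: min_le_iff_disj min.bounded_iff)
        qed (use True Lc in \<open>auto simp: Dl_def min_def\<close>)
      qed
      then show "x \<le> min 1 (Ls + Lc)" using x by simp
    next
      fix y assume "\<And>x. x \<in> range (Dl Lc Ls) \<Longrightarrow> x \<le> y"
      then show "min 1 (Ls + Lc) \<le> y" by (intro sup_small[OF Lc Ls]) auto
    qed
  next
    case False
    define K where "K = Ls - 1"
    have K: "K > 0" using False by (simp add: K_def)
    define rs where "rs = K / (K + m)"
    have rs: "0 < rs" "rs < 1" using K m by (auto simp: rs_def)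
    have F: "min 1 (Ls + Lc) + min 1 Lc * max 0 (Ls - 1) / (Ls - 1 + min 1 Lc) = 1 + m * rs"
      using False Lc K by (simp add: m_def[symmetric] K_def[symmetric] rs_def)
    have "(K + m) * rs = K" using K m by (simp add: rs_def)
    hence h: "K * rs + m * rs = K" by (simp add: algebra_simps)
    have "rs + Ls * (1 - rs) = 1 + K - K * rs" by (simp add: K_def algebra_simps)
    hence id1: "rs + Ls * (1 - rs) = 1 + m * rs" using h by linarith
    have mrs: "m * rs \<le> K"
    proof -
      have "m * rs = K * (m / (K + m))" by (simp add: rs_def)
      also have "\<dots> \<le> K * 1" using K m by (intro mult_left_mono) auto
      finally show ?thesis by simp
    qed
    have e: "Dl Lc Ls rs = min Ls (min (rs + Ls*(1-rs)) (1 + m*rs))" using rs by (simp add: Dl_def m_def)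
    have att: "Dl Lc Ls rs = 1 + m * rs"
      unfolding e id1 using mrs by (simp add: K_def min_def)
    show ?thesis unfolding F
    proof (rule cSup_eq_non_empty)
      show "range (Dl Lc Ls) \<noteq> {}" by simp
      fix x assume "x \<in> range (Dl Lc Ls)"
      then obtain r where x: "x = Dl Lc Ls r" by auto
      have one: "1 \<le> 1 + m * rs" using m rs by simp
      have "Dl Lc Ls r \<le> 1 + m * rs"
      proof -
        consider "r \<le> -1" | "-1 < r" "r < 0" | "r = 0" | "0 < r" "r < 1" | "r \<ge> 1" by linarith
        then show ?thesis
        proof cases
          case 4
          have e4: "Dl Lc Ls r = min Ls (min (r + Ls*(1-r)) (1 + m*r))" using 4 by (simp add: Dl_def m_def)
          show ?thesis
          proof (cases "r \<le> rs")
            case True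
            have "m * r \<le> m * rs" using True m by (intro mult_left_mono) auto
            then show ?thesis unfolding e4 by (intro min.coboundedI2) simp
          next
            case False
            have "K * rs \<le> K * r" using False K by (intro mult_left_mono) auto
            moreover have "r + Ls * (1 - r) = Ls - K * r" "rs + Ls * (1 - rs) = Ls - K * rs"
              by (simp_all add: K_def algebra_simps)
            ultimately have "r + Ls * (1 - r) \<le> 1 + m * rs" using id1 by linarith
            then show ?thesis unfolding e4 by (intro min.coboundedI2 min.coboundedI1)
          qed
        qed (use one in \<open>auto simp: Dl_def min_def\<close>)
      qed
      then show "x \<le> 1 + m * rs" using x by simp
    next
      fix y assume "\<And>x. x \<in> range (Dl Lc Ls) \<Longrightarrow> x \<le> y"
      then show "1 + m * rs \<le> y" using att by (metis rangeI)
    qed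
  qed
qed

theorem lemma10:
  fixes Lc Ls :: real
  assumes "Lc > 0" and "Ls > 0"
  shows "(\<forall>r::real. \<exists>d::real.
            ((\<lambda>\<rho>. - ln (ED_hda Lc Ls \<rho> (\<rho> powr r)) / ln \<rho>) \<longlongrightarrow> d) at_top)
       \<and> (SUP r::real. hda_exponent Lc Ls r)
           = min 1 (Ls + Lc) + min 1 Lc * max 0 (Ls - 1) / (Ls - 1 + min 1 Lc)"
proof
  show "\<forall>r::real. \<exists>d::real. ((\<lambda>\<rho>. - ln (ED_hda Lc Ls \<rho> (\<rho> powr r)) / ln \<rho>) \<longlongrightarrow> d) at_top"
    using lim_all[OF assms] by blast
  have "hda_exponent Lc Ls = Dl Lc Ls" using hda_exponent_eq[OF assms] by auto
  then show "(SUP r::real. hda_exponent Lc Ls r) = min 1 (Ls + Lc) + min 1 Lc * max 0 (Ls - 1) / (Ls - 1 + min 1 Lc)"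
    using sup_Dl[OF assms] by simp
qed


end
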